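(* Let $\phi=\tilde p/p$ be a degree $(n,1)$ rational inner function as in the context and define $W(x,\zeta)=W_x(\zeta)=\frac{|p_1(\zeta)|^2-|p_2(\zeta)|^2}{|\tilde p_1(\zeta)-xp_2(\zeta)|^2}$ for $(x,\zeta)\in\mathbb{T}^2$. Then: (i) $W$ is well defined and continuous on $\mathbb{T}^2$ except possibly at the finitely many points $(\alpha,\tau_k)$ for which $\alpha$ is an exceptional value of $\phi$ and $L_k\subseteq\mathcal{C}_\alpha$; (ii) for each $\alpha\in\mathbb{T}$, $W_\alpha$ has at most finitely many discontinuities on $\mathbb{T}$, all removable; in particular $W_\alpha$ coincides $m$-a.e. on $\mathbb{T}$ with a bounded continuous function.
   Context: $\mathbb{D}$ is the open unit disk, $\mathbb{T}$ the unit circle, $m$ normalized Lebesgue measure on $\mathbb{T}$. Fix $n\ge1$. Let $p\in\mathbb{C}[z_1,z_2]$ have no zeros on $\mathbb{D}^2$, degree at most $n$ in $z_1$ and at most $1$ in $z_2$; write $p(z)=p_1(z_1)+z_2p_2(z_1)$. Set $\tilde p(z)=z_1^nz_2\overline{p(1/\bar z_1,1/\bar z_2)}=z_2\tilde p_1(z_1)+\tilde p_2(z_1)$ with $\tilde p_i(z)=z^n\overline{p_i(1/\bar z)}$. Assume $\tilde p$ has degree exactly $(n,1)$ and $p,\tilde p$ have no common factor, so $\phi=\tilde p/p$ is a degree $(n,1)$ rational inner function. The zeros of $p$ on $\mathbb{T}^2$ are finitely many points $(\tau_k,\lambda_k)$; $\phi^*$ (non-tangential limit) exists and is unimodular at every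 point of $\mathbb{T}^2$. $\alpha\in\mathbb{T}$ is exceptional if $\phi^*(\tau_k,\lambda_k)=\alpha$ for some $k$. $L_k=\{\tau_k\}\times\mathbb{T}$; $\mathcal{C}_\alpha=\{\zeta\in\mathbb{T}^2:\tilde p(\zeta)=\alpha p(\zeta)\}$. *)

theory Defs
  imports "HOL-Analysis.Analysis" "HOL-Computational_Algebra.Polynomial"
begin

text \<open>Reflection of a one-variable polynomial of degree at most n:
  refl n q (z) = z^n * conj (q (1 / conj z)), i.e. coefficient i is cnj (coeff q (n - i)).\<close>
definition refl :: "nat \<Rightarrow> complex poly \<Rightarrow> complex poly" where
  "refl n q = (\<Sum>j\<le>n. monom (cnj (coeff q j)) (n - j))"

definition pev :: "complex poly \<Rightarrow> complex poly \<Rightarrow> complex \<Rightarrow> complex \<Rightarrow> complex" where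
  "pev p1 p2 z1 z2 = poly p1 z1 + z2 * poly p2 z1"

definition ptev :: "nat \<Rightarrow> complex poly \<Rightarrow> complex poly \<Rightarrow> complex \<Rightarrow> complex \<Rightarrow> complex" where
  "ptev n p1 p2 z1 z2 = z2 * poly (refl n p1) z1 + poly (refl n p2) z1"

definition rif :: "nat \<Rightarrow> complex poly \<Rightarrow> complex poly \<Rightarrow> complex \<times> complex \<Rightarrow> complex" where
  "rif n p1 p2 z = ptev n p1 p2 (fst z) (snd z) / pev p1 p2 (fst z) (snd z)"

definition nt_region :: "complex \<times> complex \<Rightarrow> real \<Rightarrow> (complex \<times> complex) set" where
  "nt_region \<zeta> c = {z. norm (fst z) < 1 \<and> norm (snd z) < 1 \<and>
      norm (fst \<zeta> - fst z) < c * (1 - norm (fst z)) \<and>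
      norm (snd \<zeta> - snd z) < c * (1 - norm (snd z))}"

definition nt_limit :: "(complex \<times> complex \<Rightarrow> complex) \<Rightarrow> complex \<times> complex \<Rightarrow> complex \<Rightarrow> bool" where
  "nt_limit f \<zeta> L \<longleftrightarrow> (\<forall>c>1. (f \<longlongrightarrow> L) (at \<zeta> within nt_region \<zeta> c))"

definition Wfun :: "nat \<Rightarrow> complex poly \<Rightarrow> complex poly \<Rightarrow> complex \<Rightarrow> complex \<Rightarrow> real" where
  "Wfun n p1 p2 x \<zeta> =
     ((cmod (poly p1 \<zeta>))\<^sup>2 - (cmod (poly p2 \<zeta>))\<^sup>2) /
     (cmod (poly (refl n p1) \<zeta> - x * poly p2 \<zeta>))\<^sup>2"

text \<open>The exceptional points (alpha, tau_k): tau_k is the first coordinate of a zero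
  (tau_k, lambda_k) of p on the torus, the non-tangential limit of phi there is alpha,
  and L_k = {tau_k} x T is contained in C_alpha.\<close>
definition exc_pts :: "nat \<Rightarrow> complex poly \<Rightarrow> complex poly \<Rightarrow> (complex \<times> complex) set" where
  "exc_pts n p1 p2 = {(\<alpha>, \<tau>) | \<alpha> \<tau>. \<exists>lam.
      \<tau> \<in> sphere 0 1 \<and> lam \<in> sphere 0 1 \<and> pev p1 p2 \<tau> lam = 0 \<and>
      nt_limit (rif n p1 p2) (\<tau>, lam) \<alpha> \<and>
      (\<forall>\<mu>\<in>sphere 0 1. ptev n p1 p2 \<tau> \<mu> = \<alpha> * pev p1 p2 \<tau> \<mu>)}"

end

theory Submission
  imports Defs "HOL-Complex_Analysis.Complex_Analysis" "HOL-Computational_Algebra.Polynomial_Factorial"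
    "HOL-Computational_Algebra.Field_as_Ring"
begin


lemma poly_sum_le:
  fixes q :: "complex poly"
  assumes "degree q \<le> n"
  shows "poly q w = (\<Sum>j\<le>n. coeff q j * w ^ j)"
proof -
  have "poly q w = (\<Sum>j\<le>degree q. coeff q j * w ^ j)" by (simp add: poly_altdef)
  also have "\<dots> = (\<Sum>j\<le>n. coeff q j * w ^ j)"
    by (rule sum.mono_neutral_left) (use assms le_degree in auto)
  finally show ?thesis .
qed

lemma poly_refl: "poly (refl n q) z = (\<Sum>j\<le>n. cnj (coeff q j) * z ^ (n - j))"
  by (simp add: refl_def poly_sum poly_monom)

lemma poly_refl_nz:
  assumes "degree q \<le> n" "z \<noteq> 0"
  shows "poly (refl n q) z = z ^ n * cnj (poly q (1 / cnj z))"
proof -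
  have "z ^ n * cnj (poly q (1 / cnj z)) = (\<Sum>j\<le>n. cnj (coeff q j) * (z ^ n * (1/z) ^ j))"
    by (simp add: poly_sum_le[OF assms(1)] sum_distrib_left mult_ac power_divide)
  also have "\<dots> = (\<Sum>j\<le>n. cnj (coeff q j) * z ^ (n - j))"
  proof (rule sum.cong[OF refl])
    fix j assume "j \<in> {..n}"
    then have "z ^ n = z ^ (n - j) * z ^ j" by (simp add: power_add[symmetric])
    then show "cnj (coeff q j) * (z ^ n * (1/z) ^ j) = cnj (coeff q j) * z ^ (n - j)"
      using assms(2) by (simp add: power_divide)
  qed
  finally show ?thesis by (simp add: poly_refl)
qed

lemma poly_refl_T:
  assumes "degree q \<le> n" "cmod z = 1"
  shows "poly (refl n q) z = z ^ n * cnj (poly q z)"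
proof -
  have z0: "z \<noteq> 0" using assms by auto
  have "z * cnj z = 1" using assms(2) complex_norm_square[of z] by simp
  moreover have "cnj z \<noteq> 0" using assms by auto
  ultimately have "1 / cnj z = z" by (simp add: divide_simps)
  then show ?thesis using poly_refl_nz[OF assms(1) z0] by simp
qed

lemma degree_refl: "degree (refl n q) \<le> n"
  unfolding refl_def by (rule degree_sum_le) (auto intro: order.trans[OF degree_monom_le])

lemma poly_eq_nz:
  fixes p q :: "complex poly"
  assumes "\<And>z. z \<noteq> 0 \<Longrightarrow> poly p z = poly q z"
  shows "p = q"
proof -
  have "{z. poly (p - q) z = 0} \<supseteq> - {0}" using assms by auto
  then have "infinite {z. poly (p - q) z = 0}"
    by (metis finite_compl infinite_UNIV_char_0 finite_subset finite.emptyI finite_insert)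
  then have "p - q = 0" using poly_roots_finite by blast
  then show ?thesis by simp
qed

lemma coeff_refl: "coeff (refl n q) i = (if i \<le> n then cnj (coeff q (n - i)) else 0)"
proof -
  have "coeff (refl n q) i = (\<Sum>j\<le>n. if n - j = i then cnj (coeff q j) else 0)"
    by (simp add: refl_def coeff_sum coeff_monom)
  also have "\<dots> = (\<Sum>j\<le>n. if j = n - i \<and> i \<le> n then cnj (coeff q j) else 0)"
    by (rule sum.cong) auto
  also have "\<dots> = (if i \<le> n then cnj (coeff q (n - i)) else 0)"
    by (cases "i \<le> n") (simp_all add: sum.delta)
  finally show ?thesis .
qed

lemma refl_refl: assumes "degree q \<le> n" shows "refl n (refl n q) = q"
  by (rule poly_eqI) (use assms in \<open>auto simp: coeff_refl coeff_eq_0\<close>)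

lemma refl_diff: "refl n (p - q) = refl n p - refl n q"
  by (rule poly_eqI) (simp add: coeff_refl)

lemma refl_add: "refl n (p + q) = refl n p + refl n q"
  by (rule poly_eqI) (simp add: coeff_refl)

lemma refl_smult: "refl n (smult c p) = smult (cnj c) (refl n p)"
  by (rule poly_eqI) (simp add: coeff_refl)

lemma refl_0[simp]: "refl n 0 = 0"
  by (rule poly_eqI) (simp add: coeff_refl)

lemma refl_zero_iff: assumes "degree q \<le> n" shows "refl n q = 0 \<longleftrightarrow> q = 0"
  using refl_refl[OF assms] by fastforce

lemma refl_lin:
  fixes w :: complex
  assumes "degree q \<le> n - 1" "n \<ge> 1"
  shows "refl n ([:-w, 1:] * q) = [:1, - cnj w:] * refl (n - 1) q"
proof (rule poly_eq_nz)
  fix z :: complex assume z: "z \<noteq> 0"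
  have d: "degree ([:-w, 1:] * q) \<le> n"
    using assms degree_mult_le[of "[:-w,1:]" q] by (cases "q = 0") auto
  have zn: "z ^ n = z * z ^ (n - 1)" using assms(2) by (simp add: power_eq_if)
  have "poly (refl n ([:-w, 1:] * q)) z = z ^ n * cnj (poly ([:-w, 1:] * q) (1 / cnj z))"
    by (rule poly_refl_nz[OF d z])
  also have "\<dots> = z ^ n * ((1 / z - cnj w) * cnj (poly q (1 / cnj z)))"
    by (simp only: poly_mult) simp
  also have "\<dots> = (1 - cnj w * z) * (z ^ (n-1) * cnj (poly q (1 / cnj z)))"
    using z zn by (simp add: field_simps)
  also have "\<dots> = poly ([:1, - cnj w:] * refl (n - 1) q) z"
    by (simp only: poly_mult poly_refl_nz[OF assms(1) z]) simp
  finally show "poly (refl n ([:-w, 1:] * q)) z = poly ([:1, - cnj w:] * refl (n - 1) q) z" .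
qed


locale rs =
  fixes n :: nat and p1 p2 :: "complex poly"
  assumes n_pos: "n \<ge> 1"
    and deg1: "degree p1 \<le> n" and deg2: "degree p2 \<le> n"
    and no_zeros: "\<And>z1 z2. norm z1 < 1 \<Longrightarrow> norm z2 < 1 \<Longrightarrow> pev p1 p2 z1 z2 \<noteq> 0"
    and no_common: "coprime [:p1, p2:] [:refl n p2, refl n p1:]"
begin

lemma p1_D: "cmod z < 1 \<Longrightarrow> poly p1 z \<noteq> 0"
  using no_zeros[of z 0] by (simp add: pev_def)

lemma p1_nonzero: "p1 \<noteq> 0"
  using p1_D[of 0] by auto

lemma b_le_a_D: assumes "cmod z < 1" shows "cmod (poly p2 z) \<le> cmod (poly p1 z)"
proof (rule ccontr)
  assume lt: "\<not> ?thesis"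
  then have b0: "poly p2 z \<noteq> 0" by auto
  define w where "w = - poly p1 z / poly p2 z"
  have "cmod w < 1" using lt b0 by (simp add: w_def norm_divide divide_less_eq)
  moreover have "pev p1 p2 z w = 0" using b0 by (simp add: pev_def w_def)
  ultimately show False using no_zeros[OF assms] by blast
qed

lemma b_le_a: assumes "cmod z \<le> 1" shows "cmod (poly p2 z) \<le> cmod (poly p1 z)"
proof -
  have cl: "closed {z. cmod (poly p2 z) \<le> cmod (poly p1 z)}"
    by (intro closed_Collect_le continuous_intros)
  have "ball 0 1 \<subseteq> {z. cmod (poly p2 z) \<le> cmod (poly p1 z)}"
    using b_le_a_D by auto
  then have "closure (ball (0::complex) 1) \<subseteq> {z. cmod (poly p2 z) \<le> cmod (poly p1 z)}"
    using cl closure_minimal by blast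
  then show ?thesis using assms closure_ball[of 1 "0::complex"] by auto
qed

lemma not_unit_lin: fixes z :: complex shows "\<not> is_unit [:[:-z, 1:]:]"
proof
  assume "is_unit [:[:-z, 1::complex:]:]"
  then obtain c where "[:[:-z, 1::complex:]:] = [:c:]" "is_unit c" using is_unit_poly_iff by blast
  then have "is_unit [:-z, 1::complex:]" by simp
  then obtain c' where "[:-z, 1::complex:] = [:c':]" using is_unit_poly_iff by blast
  then show False by simp
qed

lemma const_dvd_pair:
  fixes r x y :: "complex poly"
  assumes "r dvd x" "r dvd y" shows "[:r:] dvd [:x, y:]"
proof -
  obtain k1 k2 where "x = r * k1" "y = r * k2" using assms by (auto elim!: dvdE)
  then have "[:x, y:] = [:r:] * [:k1, k2:]" by (simp add: mult.commute)
  then show ?thesis by (metis dvd_triv_left)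
qed

lemma no_common_root:
  "\<not> (poly p1 z = 0 \<and> poly p2 z = 0 \<and> poly (refl n p1) z = 0 \<and> poly (refl n p2) z = 0)"
proof
  assume h: "poly p1 z = 0 \<and> poly p2 z = 0 \<and> poly (refl n p1) z = 0 \<and> poly (refl n p2) z = 0"
  have "[:[:-z, 1:]:] dvd [:p1, p2:]" using h by (intro const_dvd_pair) (simp_all add: poly_eq_0_iff_dvd)
  moreover have "[:[:-z, 1:]:] dvd [:refl n p2, refl n p1:]"
    using h by (intro const_dvd_pair) (simp_all add: poly_eq_0_iff_dvd)
  ultimately have "is_unit [:[:-z, 1:]:]" using coprime_common_divisor[OF no_common] by blast
  then show False using not_unit_lin by blast
qed

lemma p1_T: assumes "cmod z = 1" shows "poly p1 z \<noteq> 0"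
proof
  assume a0: "poly p1 z = 0"
  then have b0: "poly p2 z = 0" using b_le_a[of z] assms by simp
  have "poly (refl n p1) z = 0" using poly_refl_T[OF deg1 assms] a0 by simp
  moreover have "poly (refl n p2) z = 0" using poly_refl_T[OF deg2 assms] b0 by simp
  ultimately show False using no_common_root[of z] a0 b0 by blast
qed

lemma p1_cball: "cmod z \<le> 1 \<Longrightarrow> poly p1 z \<noteq> 0"
  using p1_D p1_T by (cases "cmod z < 1") auto

lemma d_le_a: assumes "cmod z \<le> 1" shows "cmod (poly (refl n p2) z) \<le> cmod (poly p1 z)"
proof -
  define f where "f = (\<lambda>z. poly (refl n p2) z / poly p1 z)"
  have nz: "\<And>z. z \<in> cball 0 1 \<Longrightarrow> poly p1 z \<noteq> 0" using p1_cball by auto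
  have hol: "f holomorphic_on (interior (ball 0 1))"
    unfolding f_def using nz by (intro holomorphic_intros) auto
  have cont: "continuous_on (closure (ball 0 1)) f"
    unfolding f_def using nz by (intro continuous_intros) auto
  have fr: "cmod (f w) \<le> 1" if "w \<in> frontier (ball 0 1)" for w
  proof -
    have w1: "cmod w = 1" using that by simp
    have "cmod (poly (refl n p2) w) = cmod (poly p2 w)"
      using poly_refl_T[OF deg2 w1] w1 by (simp add: norm_mult norm_power)
    then show ?thesis using b_le_a[of w] w1 p1_T[OF w1] by (simp add: f_def norm_divide divide_le_eq)
  qed
  have "cmod (f z) \<le> 1"
  proof (cases "cmod z < 1")
    case True
    then show ?thesis using maximum_modulus_frontier[OF hol cont _ fr] by auto
  next
    case False
    then show ?thesis using fr assms by auto
  qed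
  then show ?thesis using p1_cball[OF assms] by (simp add: f_def norm_divide divide_le_eq)
qed

end


lemma disk_dir:
  fixes \<zeta> e :: complex and t :: real
  assumes "cmod \<zeta> = 1" "Re e > 0" "t > 0" "t * (cmod e)^2 < 2 * Re e"
  shows "cmod (\<zeta> - of_real t * \<zeta> * e) < 1"
proof -
  have eq: "\<zeta> - of_real t * \<zeta> * e = \<zeta> * (1 - of_real t * e)" by (simp add: algebra_simps)
  have h1: "(cmod (1 - of_real t * e))^2 = 1 - t * (2 * Re e - t * ((Re e)^2 + (Im e)^2))"
    by (simp only: cmod_power2) (simp add: power2_eq_square algebra_simps)
  have h2: "(Re e)^2 + (Im e)^2 = (cmod e)^2" by (simp add: cmod_power2)
  have "0 < t * (2 * Re e - t * (cmod e)^2)" using assms by simp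
  then have "(cmod (1 - of_real t * e))^2 < 1" using h1 h2 by simp
  then have "cmod (1 - of_real t * e) < 1"
    by (metis abs_norm_cancel power2_less_imp_less zero_le_one norm_ge_zero one_power2 linorder_not_le power_mono)
  then show ?thesis using eq assms(1) by (simp add: norm_mult)
qed

lemma Re_ofreal_mult: "Re (of_real r * w) = r * Re w"
  by simp

lemma dir_lemma:
  fixes K :: "complex \<Rightarrow> complex" and \<zeta> e :: complex
  assumes z1: "cmod \<zeta> = 1" and e: "Re e > 0"
    and pos: "\<And>z. cmod z < 1 \<Longrightarrow> 0 \<le> Re ((z - \<zeta>)^m * K z)"
    and cont: "isCont K \<zeta>"
  shows "0 \<le> Re ((- \<zeta> * e)^m * K \<zeta>)"
proof -
  define X where "X = (- \<zeta> * e)^m"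
  define z where "z = (\<lambda>t::real. \<zeta> - of_real t * \<zeta> * e)"
  have "e \<noteq> 0" using e by auto
  then have cme: "(cmod e)^2 > 0" by simp
  define b where "b = 2 * Re e / (cmod e)^2"
  have b0: "b > 0" using e cme by (simp add: b_def)
  have ev: "\<forall>\<^sub>F t in at_right 0. 0 \<le> Re (X * K (z t))"
  proof (rule eventually_at_rightI[OF _ b0])
    fix t assume t: "t \<in> {0<..<b}"
    then have "t * (cmod e)^2 < 2 * Re e" using cme by (simp add: b_def pos_less_divide_eq)
    then have "cmod (z t) < 1" using disk_dir[OF z1 e] t by (simp add: z_def)
    then have "0 \<le> Re ((z t - \<zeta>)^m * K (z t))" by (rule pos)
    also have "(z t - \<zeta>)^m * K (z t) = of_real (t^m) * (X * K (z t))"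
    proof -
      have eq: "z t - \<zeta> = of_real t * (- \<zeta> * e)" by (simp add: z_def algebra_simps)
      have "(z t - \<zeta>)^m = (of_real t * (- \<zeta> * e))^m" by (subst eq) (rule refl)
      also have "\<dots> = of_real t ^ m * X" unfolding X_def by (rule power_mult_distrib)
      finally have "(z t - \<zeta>)^m = of_real t ^ m * X" .
      then show ?thesis by (simp add: of_real_power)
    qed
    also have "Re \<dots> = t^m * Re (X * K (z t))" by (rule Re_ofreal_mult)
    finally have h: "0 \<le> t^m * Re (X * K (z t))" .
    have "t^m > 0" using t by simp
    then show "0 \<le> Re (X * K (z t))" using h by (metis mult_zero_right mult_le_cancel_left_pos)
  qed
  have "(z \<longlongrightarrow> \<zeta>) (at_right 0)"
    unfolding z_def by (rule tendsto_eq_intros tendsto_ident_at | simp)+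
  then have "((\<lambda>t. K (z t)) \<longlongrightarrow> K \<zeta>) (at_right 0)"
    using cont isCont_tendsto_compose by blast
  then have "((\<lambda>t. Re (X * K (z t))) \<longlongrightarrow> Re (X * K \<zeta>)) (at_right 0)"
    by (intro tendsto_intros)
  then have "0 \<le> Re (X * K \<zeta>)"
    by (rule tendsto_lowerbound[OF _ ev]) simp
  then show ?thesis by (simp add: X_def)
qed

lemma schur_m1:
  fixes K :: "complex \<Rightarrow> complex" and \<zeta> :: complex
  assumes z1: "cmod \<zeta> = 1"
    and pos: "\<And>z. cmod z < 1 \<Longrightarrow> 0 \<le> Re ((z - \<zeta>) * K z)"
    and cont: "isCont K \<zeta>"
  shows "Im (\<zeta> * K \<zeta>) = 0" "Re (\<zeta> * K \<zeta>) \<le> 0"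
proof -
  have pos': "\<And>z. cmod z < 1 \<Longrightarrow> 0 \<le> Re ((z - \<zeta>)^1 * K z)" using pos by simp
  have key: "0 \<le> - Re (\<zeta> * K \<zeta>) + N * Im (\<zeta> * K \<zeta>)" for N :: real
  proof -
    have "0 \<le> Re ((- \<zeta> * (1 + \<i> * of_real N))^1 * K \<zeta>)"
      by (rule dir_lemma[OF z1 _ pos' cont]) simp
    also have "\<dots> = - Re (\<zeta> * K \<zeta>) + N * Im (\<zeta> * K \<zeta>)"
      by (simp add: algebra_simps)
    finally show ?thesis .
  qed
  from key[of 0] show "Re (\<zeta> * K \<zeta>) \<le> 0" by simp
  show "Im (\<zeta> * K \<zeta>) = 0"
  proof (rule ccontr)
    assume ne: "Im (\<zeta> * K \<zeta>) \<noteq> 0"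
    have "0 \<le> - Re (\<zeta> * K \<zeta>) + ((Re (\<zeta> * K \<zeta>) - 1) / Im (\<zeta> * K \<zeta>)) * Im (\<zeta> * K \<zeta>)"
      by (rule key)
    also have "\<dots> = -1" using ne by simp
    finally show False by simp
  qed
qed

lemma schur_m2:
  fixes K :: "complex \<Rightarrow> complex" and \<zeta> :: complex
  assumes z1: "cmod \<zeta> = 1" and m: "m \<ge> 2"
    and pos: "\<And>z. cmod z < 1 \<Longrightarrow> 0 \<le> Re ((z - \<zeta>)^m * K z)"
    and cont: "isCont K \<zeta>"
  shows "K \<zeta> = 0"
proof -
  define Y where "Y = (- \<zeta>)^m * K \<zeta>"
  have k: "0 \<le> Re (Y * cis (k * pi / 4))" if "k \<in> {-3, -1, 1, 3::real}" for k
  proof -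
    have kb: "\<bar>k\<bar> \<le> 3" using that by auto
    have mpos: "real m \<ge> 2" using m by simp
    have hk: "\<bar>k * pi / (4 * m)\<bar> \<le> 3 * pi / 8"
    proof -
      have "\<bar>k * pi / (4 * m)\<bar> = \<bar>k\<bar> * pi / (4 * m)" by (simp add: abs_mult)
      also have "\<dots> \<le> 3 * pi / (4 * m)"
        using kb by (intro divide_right_mono mult_right_mono) auto
      also have "\<dots> \<le> 3 * pi / 8"
        using mpos by (intro divide_left_mono) auto
      finally show ?thesis .
    qed
    have "- (3 * pi / 8) \<le> k * pi / (4 * m) \<and> k * pi / (4 * m) \<le> 3 * pi / 8"
      using abs_le_D1[OF hk] abs_le_D2[OF hk] by linarith
    then have "0 < cos (k * pi / (4 * m))"
      using pi_gt_zero by (intro cos_gt_zero_pi) linarith+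
    then have "Re (cis (k * pi / (4 * m))) > 0" by simp
    from dir_lemma[OF z1 this pos cont]
    have "0 \<le> Re ((- \<zeta> * cis (k * pi / (4 * m)))^m * K \<zeta>)" .
    also have "(- \<zeta> * cis (k * pi / (4 * m)))^m = (- \<zeta>)^m * cis (k * pi / 4)"
    proof -
      have "(- \<zeta> * cis (k * pi / (4 * m)))^m = (- \<zeta>)^m * cis (k * pi / (4 * m))^m"
        by (rule power_mult_distrib)
      also have "cis (k * pi / (4 * m))^m = cis (real m * (k * pi / (4 * m)))" by (rule Complex.DeMoivre)
      also have "real m * (k * pi / (4 * m)) = k * pi / 4" using m by (simp add: field_simps)
      finally show ?thesis .
    qed
    finally show ?thesis by (simp add: Y_def mult_ac)
  qed
  define X where "X = Y * cis (- 3 * pi / 4)"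
  have c1: "cis (1 * pi / 4) = - cis (- 3 * pi / 4)"
  proof -
    have "cis (- 3 * pi / 4) * cis pi = cis (1 * pi / 4)" by (simp only: cis_mult, rule arg_cong[where f=cis], simp add: field_simps)
    then show ?thesis using cis_pi by (metis mult_minus1_right)
  qed
  have c2: "cis (- 1 * pi / 4) = \<i> * cis (- 3 * pi / 4)"
  proof -
    have "cis (- 3 * pi / 4) * cis (pi/2) = cis (- 1 * pi / 4)" by (simp only: cis_mult, rule arg_cong[where f=cis], simp add: field_simps)
    then show ?thesis by (simp add: cis_pi_half mult.commute)
  qed
  have c3: "cis (3 * pi / 4) = - \<i> * cis (- 3 * pi / 4)"
  proof -
    have "cis (- 1 * pi / 4) * cis pi = cis (3 * pi / 4)" by (simp only: cis_mult, rule arg_cong[where f=cis], simp add: field_simps)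
    then show ?thesis using c2 by (simp add: cis_pi)
  qed
  have k1: "0 \<le> Re (Y * cis (- 3 * pi / 4))" by (rule k) simp
  have k2: "0 \<le> Re (Y * cis (1 * pi / 4))" by (rule k) simp
  have k3: "0 \<le> Re (Y * cis (- 1 * pi / 4))" by (rule k) simp
  have k4: "0 \<le> Re (Y * cis (3 * pi / 4))" by (rule k) simp
  have e2: "Y * cis (1 * pi / 4) = - X" unfolding X_def c1 by (rule mult_minus_right)
  have e3: "Y * cis (- 1 * pi / 4) = \<i> * X" unfolding X_def c2 by (rule mult.left_commute)
  have e4: "Y * cis (3 * pi / 4) = - (\<i> * X)" unfolding X_def c3 by (simp only: mult_minus_left mult_minus_right mult.left_commute)
  have r1: "0 \<le> Re X" using k1 by (simp only: X_def)
  have r2: "0 \<le> - Re X" using k2 unfolding e2 by simp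
  have r3: "0 \<le> - Im X" using k3 unfolding e3 by simp
  have r4: "0 \<le> Im X" using k4 unfolding e4 by simp
  have "X = 0" using r1 r2 r3 r4 by (simp add: complex_eq_iff)
  then have "Y = 0" by (simp add: X_def)
  then show ?thesis using z1 by (auto simp: Y_def)
qed


lemma re_one_minus_ratio:
  fixes u v :: complex
  assumes "cmod u \<le> cmod v" "v \<noteq> 0"
  shows "0 \<le> Re (1 - u / v)"
proof -
  have "cmod (u / v) \<le> 1" using assms by (simp add: norm_divide divide_le_eq)
  then have "Re (u / v) \<le> 1" using complex_Re_le_cmod order_trans by blast
  then show ?thesis by simp
qed

lemma schur_poly:
  fixes f g h :: "complex poly" and \<zeta> :: complex
  assumes z1: "cmod \<zeta> = 1"
    and le: "\<And>z. cmod z \<le> 1 \<Longrightarrow> cmod (poly f z) \<le> cmod (poly g z)"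
    and nz: "\<And>z. cmod z \<le> 1 \<Longrightarrow> poly g z \<noteq> 0"
    and fac: "g - f = [:-\<zeta>, 1:] * h"
  shows "Im (\<zeta> * (poly h \<zeta> / poly g \<zeta>)) = 0"
    and "Re (\<zeta> * (poly h \<zeta> / poly g \<zeta>)) \<le> 0"
    and "g \<noteq> f \<Longrightarrow> poly h \<zeta> \<noteq> 0"
proof -
  have gz: "poly g \<zeta> \<noteq> 0" using nz z1 by simp
  have pos0: "0 \<le> Re (1 - poly f z / poly g z)" if "cmod z < 1" for z
    using that le[of z] nz[of z] by (intro re_one_minus_ratio) auto
  have pos: "0 \<le> Re ((z - \<zeta>) * (poly h z / poly g z))" if "cmod z < 1" for z
  proof -
    have "poly (g - f) z = (z - \<zeta>) * poly h z" by (simp add: fac algebra_simps)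
    then have "(z - \<zeta>) * (poly h z / poly g z) = 1 - poly f z / poly g z"
      using nz[of z] that by (simp add: field_simps)
    then show ?thesis using pos0[OF that] by simp
  qed
  have cont: "isCont (\<lambda>z. poly h z / poly g z) \<zeta>"
    using gz by (intro continuous_intros) auto
  show "Im (\<zeta> * (poly h \<zeta> / poly g \<zeta>)) = 0" "Re (\<zeta> * (poly h \<zeta> / poly g \<zeta>)) \<le> 0"
    using schur_m1[OF z1 pos cont] by auto
  show "poly h \<zeta> \<noteq> 0" if ne: "g \<noteq> f"
  proof
    assume h0: "poly h \<zeta> = 0"
    define p where "p = g - f"
    have p0: "p \<noteq> 0" using ne by (simp add: p_def)
    obtain h' where h': "h = [:-\<zeta>, 1:] * h'" using h0 by (auto simp: poly_eq_0_iff_dvd elim!: dvdE)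
    have "p = [:-\<zeta>, 1:]^2 * h'" unfolding p_def fac h' by (simp only: power2_eq_square mult.assoc)
    then have d2: "[:-\<zeta>, 1:]^2 dvd p" by (metis dvd_triv_left)
    have m2: "order \<zeta> p \<ge> 2"
    proof (rule ccontr)
      assume "\<not> order \<zeta> p \<ge> 2"
      then have "Suc (order \<zeta> p) \<le> 2" by simp
      then have "[:-\<zeta>, 1:]^Suc (order \<zeta> p) dvd [:-\<zeta>, 1:]^2" by (rule le_imp_power_dvd)
      then have "[:-\<zeta>, 1:]^Suc (order \<zeta> p) dvd p" using d2 dvd_trans by blast
      then show False using order_2[OF p0] by blast
    qed
    obtain k where k: "p = [:-\<zeta>, 1:]^order \<zeta> p * k" "\<not> [:-\<zeta>, 1:] dvd k"
      using order_decomp[OF p0] by blast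
    have pos2: "0 \<le> Re ((z - \<zeta>)^(order \<zeta> p) * (poly k z / poly g z))" if "cmod z < 1" for z
    proof -
      have "poly p z = (z - \<zeta>)^(order \<zeta> p) * poly k z"
        by (subst k(1)) (simp add: poly_power)
      then have "(z - \<zeta>)^(order \<zeta> p) * (poly k z / poly g z) = 1 - poly f z / poly g z"
        using nz[of z] that by (simp add: field_simps p_def)
      then show ?thesis using pos0[OF that] by simp
    qed
    have cont2: "isCont (\<lambda>z. poly k z / poly g z) \<zeta>"
      using gz by (intro continuous_intros) auto
    have "poly k \<zeta> / poly g \<zeta> = 0" by (rule schur_m2[OF z1 m2 pos2 cont2])
    then have "poly k \<zeta> = 0" using gz by simp
    then show False using k(2) by (simp add: poly_eq_0_iff_dvd)
  qed
qed

lemma re_half: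
  fixes z w :: complex
  assumes "cmod z = 1" "cmod w = 1" "z \<noteq> w"
  shows "Re (w / (z - w)) = - 1 / 2"
proof -
  define u where "u = z * cnj w"
  have ww: "w * cnj w = 1" using assms(2) complex_norm_square[of w] by simp
  have "cmod u = 1" using assms by (simp add: u_def norm_mult)
  then have uu: "(Re u)^2 + (Im u)^2 = 1" using cmod_power2[of u] by simp
  have u1: "u \<noteq> 1"
  proof
    assume "u = 1"
    then have "z * cnj w * w = 1 * w" by (simp add: u_def)
    then have "z * (w * cnj w) = w" by (simp add: mult_ac)
    then have "z = w" using ww by simp
    then show False using assms(3) by simp
  qed
  have "w / (z - w) = 1 / (u - 1)"
  proof -
    have "w * (u - 1) = z * (w * cnj w) - w" by (simp add: u_def algebra_simps)
    also have "\<dots> = z - w" using ww by simp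
    finally have e: "z - w = w * (u - 1)" by simp
    have "w \<noteq> 0" using ww by auto
    then show ?thesis unfolding e by simp
  qed
  also have "Re (1 / (u - 1)) = (Re u - 1) / ((Re u - 1)^2 + (Im u)^2)"
    by (simp add: Re_divide cmod_power2)
  also have "(Re u - 1)^2 + (Im u)^2 = 2 * (1 - Re u)"
    using uu by (simp add: power2_eq_square algebra_simps)
  also have "(Re u - 1) / (2 * (1 - Re u)) = - 1 / 2"
  proof -
    have "Re u \<noteq> 1"
    proof
      assume "Re u = 1"
      then have "Im u = 0" using uu by simp
      then show False using u1 \<open>Re u = 1\<close> by (simp add: complex_eq_iff)
    qed
    then show ?thesis by (simp add: field_simps)
  qed
  finally show ?thesis .
qed

lemma poly_bounded: "\<exists>K>0. \<forall>z. cmod z \<le> 1 \<longrightarrow> cmod (poly p z) \<le> K"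
proof -
  have "compact (poly p ` cball 0 1)"
    by (intro compact_continuous_image continuous_intros) auto
  then obtain K where "K > 0" "\<forall>w \<in> poly p ` cball 0 1. norm w \<le> K"
    using compact_imp_bounded bounded_pos by metis
  then show ?thesis by auto
qed


lemma sq_diff_re: fixes a v :: complex
  shows "(cmod a)^2 - (cmod v)^2 = Re ((a + v) * cnj (a - v))"
  by (simp only: cmod_power2) (simp add: algebra_simps power2_eq_square)

lemma re_div_cnj: fixes x y :: complex
  shows "Re (x / y) = Re (x * cnj y) / (cmod y)^2"
  by (simp add: Re_divide cmod_power2)

context rs begin

definition Qa :: "complex \<Rightarrow> complex poly" where
  "Qa \<alpha> = p1 - smult (cnj \<alpha>) (refl n p2)"

lemma degree_Qa: "degree (Qa \<alpha>) \<le> n"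
  unfolding Qa_def using deg1 degree_refl[of n p2]
  by (meson degree_diff_le degree_smult_le order_trans)

lemma refl_Qa: "refl n (Qa \<alpha>) = refl n p1 - smult \<alpha> p2"
  by (simp add: Qa_def refl_diff refl_smult refl_refl[OF deg2])

lemma cmod_refl1: "cmod z = 1 \<Longrightarrow> cmod (poly (refl n p1) z) = cmod (poly p1 z)"
  using poly_refl_T[OF deg1] by (simp add: norm_mult norm_power)

lemma cmod_refl2: "cmod z = 1 \<Longrightarrow> cmod (poly (refl n p2) z) = cmod (poly p2 z)"
  using poly_refl_T[OF deg2] by (simp add: norm_mult norm_power)

lemma cmod_E: assumes "cmod z = 1"
  shows "cmod (poly (refl n p1) z - \<alpha> * poly p2 z) = cmod (poly (Qa \<alpha>) z)"
proof -
  have "poly (refl n p1) z - \<alpha> * poly p2 z = poly (refl n (Qa \<alpha>)) z"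
    by (simp add: refl_Qa)
  also have "\<dots> = z ^ n * cnj (poly (Qa \<alpha>) z)" by (rule poly_refl_T[OF degree_Qa assms])
  finally show ?thesis using assms by (simp add: norm_mult norm_power)
qed

lemma W_T:
  assumes z1: "cmod z = 1" and a1: "cmod \<alpha> = 1" and q0: "poly (Qa \<alpha>) z \<noteq> 0"
  shows "Wfun n p1 p2 \<alpha> z = Re ((poly p1 z + cnj \<alpha> * poly (refl n p2) z) / poly (Qa \<alpha>) z)"
proof -
  have qz: "poly (Qa \<alpha>) z = poly p1 z - cnj \<alpha> * poly (refl n p2) z" by (simp add: Qa_def)
  have "cmod (poly p2 z) = cmod (cnj \<alpha> * poly (refl n p2) z)"
    using cmod_refl2[OF z1] a1 by (simp add: norm_mult)
  then have "(cmod (poly p1 z))^2 - (cmod (poly p2 z))^2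
      = Re ((poly p1 z + cnj \<alpha> * poly (refl n p2) z) * cnj (poly (Qa \<alpha>) z))"
    by (simp only: qz sq_diff_re)
  then show ?thesis
    by (simp add: Wfun_def re_div_cnj cmod_E[OF z1])
qed

lemma W_limit:
  assumes a1: "cmod \<alpha> = 1" and z01: "cmod \<zeta>0 = 1" and q0: "poly (Qa \<alpha>) \<zeta>0 = 0"
    and qn: "Qa \<alpha> \<noteq> 0"
  shows "\<exists>L. (Wfun n p1 p2 \<alpha> \<longlongrightarrow> L) (at \<zeta>0 within sphere 0 1)"
proof -
  obtain h where h: "Qa \<alpha> = [:-\<zeta>0, 1:] * h" using q0 by (auto simp: poly_eq_0_iff_dvd elim!: dvdE)
  have le: "cmod (poly (smult (cnj \<alpha>) (refl n p2)) z) \<le> cmod (poly p1 z)" if "cmod z \<le> 1" for z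
    using d_le_a[OF that] a1 by (simp add: norm_mult)
  have fac: "p1 - smult (cnj \<alpha>) (refl n p2) = [:-\<zeta>0, 1:] * h" using h by (simp add: Qa_def)
  have ne: "p1 \<noteq> smult (cnj \<alpha>) (refl n p2)" using qn by (simp add: Qa_def)
  have S1: "Im (\<zeta>0 * (poly h \<zeta>0 / poly p1 \<zeta>0)) = 0"
    by (rule schur_poly(1)[of \<zeta>0 "smult (cnj \<alpha>) (refl n p2)" p1 h]) (use z01 le p1_cball fac in auto)
  have hz: "poly h \<zeta>0 \<noteq> 0"
    by (rule schur_poly(3)[of \<zeta>0 "smult (cnj \<alpha>) (refl n p2)" p1 h]) (use z01 le p1_cball fac ne in auto)
  have az: "poly p1 \<zeta>0 \<noteq> 0" using p1_T[OF z01] .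
  define s where "s = Re (\<zeta>0 * (poly h \<zeta>0 / poly p1 \<zeta>0))"
  have s_eq: "\<zeta>0 * (poly h \<zeta>0 / poly p1 \<zeta>0) = of_real s"
    using S1 by (simp add: s_def complex_eq_iff)
  have z0nz: "\<zeta>0 \<noteq> 0" using z01 by auto
  have s0: "s \<noteq> 0"
  proof
    assume "s = 0"
    then have "\<zeta>0 * (poly h \<zeta>0 / poly p1 \<zeta>0) = 0" using s_eq by simp
    then show False using hz az z0nz by simp
  qed
  define Fn where "Fn = (\<lambda>z. (poly p1 z + cnj \<alpha> * poly (refl n p2) z) / poly h z)"
  have op: "open {z. poly h z \<noteq> 0}" by (intro open_Collect_neq continuous_intros)
  have "Fn holomorphic_on {z. poly h z \<noteq> 0}"
    unfolding Fn_def by (intro holomorphic_intros) auto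
  then have "Fn field_differentiable at \<zeta>0"
    using holomorphic_on_imp_differentiable_at[OF _ op] hz by auto
  then obtain D where D: "(Fn has_field_derivative D) (at \<zeta>0)"
    unfolding field_differentiable_def by blast
  define DQ where "DQ = (\<lambda>z. (Fn z - Fn \<zeta>0) / (z - \<zeta>0))"
  have DQ: "(DQ \<longlongrightarrow> D) (at \<zeta>0 within sphere 0 1)"
    using has_field_derivative_at_within[OF D] unfolding has_field_derivative_iff DQ_def .
  have lim: "((\<lambda>z. - 1 / s + Re (DQ z)) \<longlongrightarrow> - 1 / s + Re D) (at \<zeta>0 within sphere 0 1)"
    by (intro tendsto_intros DQ)
  have Fn0: "Fn \<zeta>0 = of_real (2 / s) * \<zeta>0"
  proof -
    have "poly p1 \<zeta>0 = cnj \<alpha> * poly (refl n p2) \<zeta>0" using q0 by (simp add: Qa_def)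
    then have "Fn \<zeta>0 = 2 * poly p1 \<zeta>0 / poly h \<zeta>0" by (simp add: Fn_def)
    also have "poly h \<zeta>0 = of_real s * poly p1 \<zeta>0 / \<zeta>0"
      using s_eq az z0nz by (simp add: field_simps)
    finally show ?thesis using az z0nz s0 by (simp add: field_simps)
  qed
  have ev1: "\<forall>\<^sub>F z in at \<zeta>0 within sphere 0 1. poly h z \<noteq> 0"
  proof -
    have "(poly h \<longlongrightarrow> poly h \<zeta>0) (at \<zeta>0 within sphere 0 1)"
      by (intro tendsto_intros)
    then show ?thesis using hz tendsto_imp_eventually_ne by blast
  qed
  have ev2: "\<forall>\<^sub>F z in at \<zeta>0 within sphere 0 1. z \<in> sphere 0 1 \<and> z \<noteq> \<zeta>0"
    by (simp add: eventually_at_filter)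
  have ev: "\<forall>\<^sub>F z in at \<zeta>0 within sphere 0 1. - 1 / s + Re (DQ z) = Wfun n p1 p2 \<alpha> z"
    using ev1 ev2
  proof eventually_elim
    case (elim z)
    then have z1: "cmod z = 1" and zne: "z \<noteq> \<zeta>0" and hz': "poly h z \<noteq> 0" by auto
    have Qz: "poly (Qa \<alpha>) z = (z - \<zeta>0) * poly h z" by (simp add: h algebra_simps)
    have qz0: "poly (Qa \<alpha>) z \<noteq> 0" using Qz zne hz' by simp
    have "Wfun n p1 p2 \<alpha> z = Re ((poly p1 z + cnj \<alpha> * poly (refl n p2) z) / poly (Qa \<alpha>) z)"
      by (rule W_T[OF z1 a1 qz0])
    also have "(poly p1 z + cnj \<alpha> * poly (refl n p2) z) / poly (Qa \<alpha>) z = Fn z / (z - \<zeta>0)"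
      using Qz hz' zne by (simp add: Fn_def field_simps)
    also have "Fn z / (z - \<zeta>0) = Fn \<zeta>0 / (z - \<zeta>0) + DQ z"
      by (simp add: DQ_def diff_divide_distrib)
    also have "Fn \<zeta>0 / (z - \<zeta>0) = of_real (2 / s) * (\<zeta>0 / (z - \<zeta>0))"
      unfolding Fn0 by (rule times_divide_eq_right[symmetric])
    also have "Re (of_real (2 / s) * (\<zeta>0 / (z - \<zeta>0)) + DQ z) = (2 / s) * Re (\<zeta>0 / (z - \<zeta>0)) + Re (DQ z)"
      by (simp only: plus_complex.sel Re_ofreal_mult)
    also have "Re (\<zeta>0 / (z - \<zeta>0)) = - 1 / 2" by (rule re_half[OF z1 z01 zne])
    finally show ?case by simp
  qed
  show ?thesis using Lim_transform_eventually[OF lim ev] by blast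
qed

end


lemma lin_factor:
  fixes p :: "complex poly"
  assumes "poly p w = 0" obtains q where "p = [:-w, 1:] * q"
  using assms by (auto simp: poly_eq_0_iff_dvd elim!: dvdE)

lemma lin_factor_eval:
  fixes p :: "complex poly"
  obtains q where "\<And>z. poly p z = poly p w + (z - w) * poly q z"
proof -
  have "poly (p - [:poly p w:]) w = 0" by simp
  then obtain q where q: "p - [:poly p w:] = [:-w, 1:] * q" by (rule lin_factor)
  have "poly p z = poly p w + (z - w) * poly q z" for z
  proof -
    have "poly (p - [:poly p w:]) z = poly ([:-w, 1:] * q) z" using q by simp
    then show ?thesis by (simp add: algebra_simps)
  qed
  then show ?thesis using that by blast
qed

lemma const_lin_mult: "[:x:] * [:y, 1:] = [:x * y, x::complex poly:]"
  by (simp add: mult_pCons_left)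

lemma mult_const_right: "(p::complex poly) * [:c:] = smult c p"
  by (simp add: mult_pCons_right)

lemma smult_const_aux: "cnj lam * lam = 1 \<Longrightarrow> smult (- cnj lam) (d::complex poly) * [:- lam:] = d"
proof -
  assume h: "cnj lam * lam = 1"
  have "smult (- cnj lam) d * [:- lam:] = smult (- lam) (smult (- cnj lam) d)" by (rule mult_const_right)
  also have "\<dots> = smult ((- lam) * (- cnj lam)) d" by (rule smult_smult)
  also have "(- lam) * (- cnj lam) = cnj lam * lam" by (simp add: mult.commute)
  finally show ?thesis using h by simp
qed

context rs begin

lemma numer_factor:
  assumes x1: "cmod x = 1" and z1: "cmod \<zeta> = 1"
    and E0: "poly (refl n p1) \<zeta> = x * poly p2 \<zeta>"
    and lam: "poly p1 \<zeta> + lam * poly p2 \<zeta> = 0"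
  shows "\<exists>qt M2. \<forall>z1 z2. ptev n p1 p2 z1 z2 - x * pev p1 p2 z1 z2
     = (z1 - \<zeta>) * ((z2 - lam) * (- cnj \<zeta>) * poly qt z1 + (z1 - \<zeta>) * poly M2 z1)"
proof -
  have xx: "x * cnj x = 1" using x1 complex_norm_square[of x] by simp
  have zz: "\<zeta> * cnj \<zeta> = 1" using z1 complex_norm_square[of \<zeta>] by simp
  have az: "poly p1 \<zeta> \<noteq> 0" using p1_T[OF z1] .
  have c_eq: "poly (refl n p1) \<zeta> = \<zeta>^n * cnj (poly p1 \<zeta>)" by (rule poly_refl_T[OF deg1 z1])
  have d_eq0: "poly (refl n p2) \<zeta> = \<zeta>^n * cnj (poly p2 \<zeta>)" by (rule poly_refl_T[OF deg2 z1])
  have d_eq: "poly (refl n p2) \<zeta> = x * poly p1 \<zeta>"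
  proof -
    have "cnj \<zeta> ^ n * poly p1 \<zeta> = cnj x * cnj (poly p2 \<zeta>)"
      using arg_cong[OF E0, of cnj] c_eq by simp
    then have "x * \<zeta>^n * (cnj \<zeta> ^ n * poly p1 \<zeta>) = x * \<zeta>^n * (cnj x * cnj (poly p2 \<zeta>))" by simp
    moreover have "x * \<zeta>^n * (cnj \<zeta> ^ n * poly p1 \<zeta>) = x * poly p1 \<zeta> * (\<zeta> * cnj \<zeta>)^n"
      by (simp add: power_mult_distrib mult_ac)
    moreover have "x * \<zeta>^n * (cnj x * cnj (poly p2 \<zeta>)) = (x * cnj x) * (\<zeta>^n * cnj (poly p2 \<zeta>))"
      by (simp add: mult_ac)
    ultimately show ?thesis using zz xx d_eq0 by simp
  qed
  define Q where "Q = Qa x"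
  have Q0: "poly Q \<zeta> = 0" using d_eq xx by (simp add: Q_def Qa_def mult.assoc[symmetric] mult.commute[of "cnj x"])
  obtain q where q: "Q = [:-\<zeta>, 1:] * q" using Q0 by (rule lin_factor)
  have dq: "degree q \<le> n - 1"
  proof (cases "q = 0")
    case True then show ?thesis by simp
  next
    case False
    have "degree Q = degree [:-\<zeta>, 1:] + degree q" unfolding q
      by (rule degree_mult_eq) (use False in auto)
    then show ?thesis using degree_Qa[of x] by (simp add: Q_def)
  qed
  define qt where "qt = refl (n - 1) q"
  have reflQ: "refl n Q = [:1, - cnj \<zeta>:] * qt"
    unfolding q qt_def by (rule refl_lin[OF dq n_pos])
  have cE: "poly (refl n p1) z - x * poly p2 z = - cnj \<zeta> * (z - \<zeta>) * poly qt z" for z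
  proof -
    have "poly (refl n p1) z - x * poly p2 z = poly (refl n Q) z" by (simp add: Q_def refl_Qa)
    also have "\<dots> = (1 - cnj \<zeta> * z) * poly qt z" by (simp add: reflQ algebra_simps)
    also have "1 - cnj \<zeta> * z = - cnj \<zeta> * (z - \<zeta>)" using zz by (simp add: algebra_simps)
    finally show ?thesis .
  qed
  have dE: "poly (refl n p2) z - x * poly p1 z = - x * (z - \<zeta>) * poly q z" for z
  proof -
    have "poly Q z = (z - \<zeta>) * poly q z" by (simp add: q algebra_simps)
    moreover have "poly Q z = poly p1 z - cnj x * poly (refl n p2) z" by (simp add: Q_def Qa_def)
    ultimately have "- x * (z - \<zeta>) * poly q z = - x * (poly p1 z - cnj x * poly (refl n p2) z)"
      by simp
    also have "\<dots> = - x * poly p1 z + (x * cnj x) * poly (refl n p2) z"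
      by (simp add: algebra_simps)
    finally show ?thesis using xx by simp
  qed
  have le: "cmod (poly (smult (cnj x) (refl n p2)) z) \<le> cmod (poly p1 z)" if "cmod z \<le> 1" for z
    using d_le_a[OF that] x1 by (simp add: norm_mult)
  have fac: "p1 - smult (cnj x) (refl n p2) = [:-\<zeta>, 1:] * q" using q by (simp add: Q_def Qa_def)
  have S1: "Im (\<zeta> * (poly q \<zeta> / poly p1 \<zeta>)) = 0"
    by (rule schur_poly(1)[of \<zeta> "smult (cnj x) (refl n p2)" p1 q]) (use z1 le p1_cball fac in auto)
  define s where "s = Re (\<zeta> * (poly q \<zeta> / poly p1 \<zeta>))"
  have s_eq: "\<zeta> * (poly q \<zeta> / poly p1 \<zeta>) = of_real s" using S1 by (simp add: s_def complex_eq_iff)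
  have qz: "poly q \<zeta> = of_real s * poly p1 \<zeta> * cnj \<zeta>"
  proof -
    have zz': "cnj \<zeta> * \<zeta> = 1" using zz by (simp add: mult.commute)
    have "poly q \<zeta> = cnj \<zeta> * (\<zeta> * (poly q \<zeta> / poly p1 \<zeta>)) * poly p1 \<zeta>"
      using az zz zz' by (simp add: field_simps)
    also have "\<dots> = cnj \<zeta> * of_real s * poly p1 \<zeta>" by (simp only: s_eq)
    finally show ?thesis by (simp add: mult_ac)
  qed
  have qtz: "poly qt \<zeta> = \<zeta>^(n-1) * cnj (poly q \<zeta>)"
    unfolding qt_def by (rule poly_refl_T[OF dq z1])
  define M1 where "M1 = smult (- cnj \<zeta> * lam) qt - smult x q"
  have M1z: "poly M1 \<zeta> = 0"
  proof -
    have zn: "\<zeta>^n = \<zeta> * \<zeta>^(n-1)" using n_pos by (simp add: power_eq_if)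
    have cs: "cnj (of_real s :: complex) = of_real s" by simp
    have "poly M1 \<zeta> = - cnj \<zeta> * lam * (\<zeta>^(n-1) * (of_real s * cnj (poly p1 \<zeta>) * \<zeta>))
        - x * (of_real s * poly p1 \<zeta> * cnj \<zeta>)"
      by (simp add: M1_def qtz qz)
    also have "\<dots> = - of_real s * cnj \<zeta> * (lam * (\<zeta>^n * cnj (poly p1 \<zeta>)) + x * poly p1 \<zeta>)"
      by (simp add: zn algebra_simps)
    also have "\<dots> = - of_real s * cnj \<zeta> * (x * (poly p1 \<zeta> + lam * poly p2 \<zeta>))"
      using zz c_eq[symmetric] E0 by (simp add: algebra_simps)
    also have "\<dots> = 0" using lam by simp
    finally show ?thesis .
  qed
  obtain M2 where M2: "M1 = [:-\<zeta>, 1:] * M2" using M1z by (rule lin_factor)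
  have M2e: "poly M1 z = (z - \<zeta>) * poly M2 z" for z by (simp add: M2 algebra_simps)
  have "ptev n p1 p2 z1 z2 - x * pev p1 p2 z1 z2
     = (z1 - \<zeta>) * ((z2 - lam) * (- cnj \<zeta>) * poly qt z1 + (z1 - \<zeta>) * poly M2 z1)" for z1 z2
  proof -
    have "ptev n p1 p2 z1 z2 - x * pev p1 p2 z1 z2
        = z2 * (poly (refl n p1) z1 - x * poly p2 z1) + (poly (refl n p2) z1 - x * poly p1 z1)"
      by (simp add: ptev_def pev_def algebra_simps)
    also have "\<dots> = z2 * (- cnj \<zeta> * (z1 - \<zeta>) * poly qt z1) + (- x * (z1 - \<zeta>) * poly q z1)"
      by (simp only: cE dE)
    also have "\<dots> = (z1 - \<zeta>) * ((z2 - lam) * (- cnj \<zeta>) * poly qt z1 + poly M1 z1)"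
      by (simp add: M1_def algebra_simps)
    also have "\<dots> = (z1 - \<zeta>) * ((z2 - lam) * (- cnj \<zeta>) * poly qt z1 + (z1 - \<zeta>) * poly M2 z1)"
      by (simp only: M2e)
    finally show ?thesis .
  qed
  then show ?thesis by blast
qed

lemma G_nonzero:
  assumes lam1: "cmod lam = 1"
  shows "p1 + smult lam p2 \<noteq> 0"
proof
  assume G0: "p1 + smult lam p2 = 0"
  then have p1e: "p1 = smult (- lam) p2" by (simp add: eq_neg_iff_add_eq_0[symmetric])
  have ll: "cnj lam * lam = 1" using lam1 complex_norm_square[of lam] by (simp add: mult.commute)
  define A :: "complex poly poly" where "A = [:[:-lam:], 1:]"
  have "[:p2:] * A = [:p2 * [:-lam:], p2:]" unfolding A_def by (rule const_lin_mult)
  then have "[:p1, p2:] = [:p2:] * A" by (simp only: mult_const_right p1e)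
  then have d1: "A dvd [:p1, p2:]" by (metis dvd_triv_right)
  have ce: "refl n p1 = smult (- cnj lam) (refl n p2)" by (subst p1e, subst refl_smult, simp)
  have "smult (- cnj lam) (refl n p2) * [:- lam:] = refl n p2"
    using ll by (rule smult_const_aux)
  moreover have "[:smult (- cnj lam) (refl n p2):] * A
     = [:smult (- cnj lam) (refl n p2) * [:-lam:], smult (- cnj lam) (refl n p2):]"
    unfolding A_def by (rule const_lin_mult)
  ultimately have "[:refl n p2, refl n p1:] = [:smult (- cnj lam) (refl n p2):] * A"
    by (simp only: ce)
  then have d2: "A dvd [:refl n p2, refl n p1:]" by (metis dvd_triv_right)
  have "is_unit A" using coprime_common_divisor[OF no_common d1 d2] .
  then obtain c where "A = [:c:]" using is_unit_poly_iff by blast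
  then show False by (simp add: A_def)
qed

lemma denom_factor:
  assumes z1: "cmod \<zeta> = 1" and lam1: "cmod lam = 1"
    and lam: "poly p1 \<zeta> + lam * poly p2 \<zeta> = 0"
  shows "\<exists>\<rho>>0. \<exists>r2 b2. \<forall>z1 z2. pev p1 p2 z1 z2 =
     - poly p2 \<zeta> * lam * (of_real \<rho> * (1 - cnj \<zeta> * z1) + (1 - cnj lam * z2))
     + (z1 - \<zeta>) * ((z1 - \<zeta>) * poly r2 z1 + (z2 - lam) * poly b2 z1)"
proof -
  have zz: "\<zeta> * cnj \<zeta> = 1" using z1 complex_norm_square[of \<zeta>] by simp
  have ll: "lam * cnj lam = 1" using lam1 complex_norm_square[of lam] by simp
  have az: "poly p1 \<zeta> \<noteq> 0" using p1_T[OF z1] .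
  define G where "G = p1 + smult lam p2"
  have G0: "poly G \<zeta> = 0" using lam by (simp add: G_def)
  obtain r where r: "G = [:-\<zeta>, 1:] * r" using G0 by (rule lin_factor)
  have Gn: "G \<noteq> 0" unfolding G_def by (rule G_nonzero[OF lam1])
  have le: "cmod (poly (smult (- lam) p2) z) \<le> cmod (poly p1 z)" if "cmod z \<le> 1" for z
    using b_le_a[OF that] lam1 by (simp add: norm_mult)
  have fac: "p1 - smult (- lam) p2 = [:-\<zeta>, 1:] * r" using r by (simp add: G_def)
  have ne: "p1 \<noteq> smult (- lam) p2" using Gn by (auto simp: G_def)
  have S1: "Im (\<zeta> * (poly r \<zeta> / poly p1 \<zeta>)) = 0"
    by (rule schur_poly(1)[of \<zeta> "smult (- lam) p2" p1 r]) (use z1 le p1_cball fac in auto)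
  have S2: "Re (\<zeta> * (poly r \<zeta> / poly p1 \<zeta>)) \<le> 0"
    by (rule schur_poly(2)[of \<zeta> "smult (- lam) p2" p1 r]) (use z1 le p1_cball fac in auto)
  have S3: "poly r \<zeta> \<noteq> 0"
    by (rule schur_poly(3)[of \<zeta> "smult (- lam) p2" p1 r]) (use z1 le p1_cball fac ne in auto)
  define \<rho> where "\<rho> = - Re (\<zeta> * (poly r \<zeta> / poly p1 \<zeta>))"
  have rho_eq: "\<zeta> * (poly r \<zeta> / poly p1 \<zeta>) = - of_real \<rho>" using S1 by (simp add: \<rho>_def complex_eq_iff)
  have rho0: "\<rho> \<noteq> 0"
  proof
    assume "\<rho> = 0"
    then have "\<zeta> * (poly r \<zeta> / poly p1 \<zeta>) = 0" using rho_eq by simp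
    then show False using S3 az z1 by auto
  qed
  have rho_pos: "\<rho> > 0" using S2 rho0 by (simp add: \<rho>_def)
  have rz: "poly r \<zeta> = of_real \<rho> * lam * poly p2 \<zeta> * cnj \<zeta>"
  proof -
    have ae: "poly p1 \<zeta> = - lam * poly p2 \<zeta>" using lam by (simp add: eq_neg_iff_add_eq_0)
    have zz': "cnj \<zeta> * \<zeta> = 1" using zz by (simp add: mult.commute)
    have "poly r \<zeta> = cnj \<zeta> * (\<zeta> * (poly r \<zeta> / poly p1 \<zeta>)) * poly p1 \<zeta>"
      using az zz zz' by (simp add: field_simps)
    also have "\<dots> = cnj \<zeta> * (- of_real \<rho>) * poly p1 \<zeta>" by (simp only: rho_eq)
    finally have "poly r \<zeta> = cnj \<zeta> * (- of_real \<rho>) * (- lam * poly p2 \<zeta>)"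
      by (simp only: ae)
    then show ?thesis by (simp add: mult_ac)
  qed
  obtain r2 where r2: "\<And>z. poly r z = poly r \<zeta> + (z - \<zeta>) * poly r2 z" using lin_factor_eval[of r \<zeta>] by blast
  obtain b2 where b2: "\<And>z. poly p2 z = poly p2 \<zeta> + (z - \<zeta>) * poly b2 z" using lin_factor_eval[of p2 \<zeta>] by blast
  have "pev p1 p2 z1 z2 =
     - poly p2 \<zeta> * lam * (of_real \<rho> * (1 - cnj \<zeta> * z1) + (1 - cnj lam * z2))
     + (z1 - \<zeta>) * ((z1 - \<zeta>) * poly r2 z1 + (z2 - lam) * poly b2 z1)" for z1 z2
  proof -
    have Gz: "poly G z1 = (z1 - \<zeta>) * poly r z1" by (simp add: r algebra_simps)
    have "pev p1 p2 z1 z2 = poly G z1 + (z2 - lam) * poly p2 z1"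
      by (simp add: pev_def G_def algebra_simps)
    also have "\<dots> = (z1 - \<zeta>) * (poly r \<zeta> + (z1 - \<zeta>) * poly r2 z1) + (z2 - lam) * (poly p2 \<zeta> + (z1 - \<zeta>) * poly b2 z1)"
      by (simp only: Gz r2[of z1, symmetric] b2[of z1, symmetric])
    also have "\<dots> = ((z1 - \<zeta>) * poly r \<zeta> + (z2 - lam) * poly p2 \<zeta>)
        + (z1 - \<zeta>) * ((z1 - \<zeta>) * poly r2 z1 + (z2 - lam) * poly b2 z1)"
      by (simp add: algebra_simps)
    also have "(z1 - \<zeta>) * poly r \<zeta> + (z2 - lam) * poly p2 \<zeta>
        = - poly p2 \<zeta> * lam * (of_real \<rho> * (1 - cnj \<zeta> * z1) + (1 - cnj lam * z2))"
    proof -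
      have "(z1 - \<zeta>) * poly r \<zeta> + (z2 - lam) * poly p2 \<zeta>
          = poly p2 \<zeta> * (of_real \<rho> * lam * (cnj \<zeta> * z1 - \<zeta> * cnj \<zeta>) + (z2 - lam))"
        by (simp add: rz algebra_simps)
      also have "\<dots> = poly p2 \<zeta> * (of_real \<rho> * lam * (cnj \<zeta> * z1 - 1) + (lam * cnj lam * z2 - lam))"
        using zz ll by simp
      also have "\<dots> = - poly p2 \<zeta> * lam * (of_real \<rho> * (1 - cnj \<zeta> * z1) + (1 - cnj lam * z2))"
        by (simp add: algebra_simps)
      finally show ?thesis .
    qed
    finally show ?thesis .
  qed
  then show ?thesis using rho_pos by blast
qed

end


lemma nt_re:
  fixes z w :: complex
  assumes w1: "cmod w = 1" and C: "C > 0" and h: "cmod (w - z) < C * (1 - cmod z)"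
  shows "cmod (z - w) < C * Re (1 - cnj w * z)"
proof -
  have "Re (cnj w * z) \<le> cmod (cnj w * z)" by (rule complex_Re_le_cmod)
  also have "\<dots> = cmod z" using w1 by (simp add: norm_mult)
  finally have "1 - cmod z \<le> Re (1 - cnj w * z)" by simp
  then have "C * (1 - cmod z) \<le> C * Re (1 - cnj w * z)" using C by simp
  then show ?thesis using h by (simp add: norm_minus_commute)
qed

context rs begin

lemma nt_tendsto:
  assumes x1: "cmod x = 1" and z1: "cmod \<zeta> = 1" and lam1: "cmod lam = 1"
    and lam: "poly p1 \<zeta> + lam * poly p2 \<zeta> = 0"
    and E0: "poly (refl n p1) \<zeta> = x * poly p2 \<zeta>"
    and C: "C > 1"
  shows "(rif n p1 p2 \<longlongrightarrow> x) (at (\<zeta>, lam) within nt_region (\<zeta>, lam) C)"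
proof -
  obtain qt M2 where num: "\<And>z1 z2. ptev n p1 p2 z1 z2 - x * pev p1 p2 z1 z2
     = (z1 - \<zeta>) * ((z2 - lam) * (- cnj \<zeta>) * poly qt z1 + (z1 - \<zeta>) * poly M2 z1)"
    using numer_factor[OF x1 z1 E0 lam] by blast
  obtain \<rho> r2 b2 where rho: "\<rho> > 0" and den: "\<And>z1 z2. pev p1 p2 z1 z2 =
     - poly p2 \<zeta> * lam * (of_real \<rho> * (1 - cnj \<zeta> * z1) + (1 - cnj lam * z2))
     + (z1 - \<zeta>) * ((z1 - \<zeta>) * poly r2 z1 + (z2 - lam) * poly b2 z1)"
    using denom_factor[OF z1 lam1 lam] by blast
  have az: "poly p1 \<zeta> \<noteq> 0" using p1_T[OF z1] .
  have bz: "poly p2 \<zeta> \<noteq> 0" using az lam by auto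
  obtain Kq where Kq: "Kq > 0" "\<And>z. cmod z \<le> 1 \<Longrightarrow> cmod (poly qt z) \<le> Kq" using poly_bounded by blast
  obtain KM where KM: "KM > 0" "\<And>z. cmod z \<le> 1 \<Longrightarrow> cmod (poly M2 z) \<le> KM" using poly_bounded by blast
  obtain Kr where Kr: "Kr > 0" "\<And>z. cmod z \<le> 1 \<Longrightarrow> cmod (poly r2 z) \<le> Kr" using poly_bounded by blast
  obtain Kb where Kb: "Kb > 0" "\<And>z. cmod z \<le> 1 \<Longrightarrow> cmod (poly b2 z) \<le> Kb" using poly_bounded by blast
  define m where "m = min \<rho> 1"
  have m0: "m > 0" "m \<le> \<rho>" "m \<le> 1" using rho by (auto simp: m_def)
  define \<kappa> where "\<kappa> = cmod (poly p2 \<zeta>) * m / C"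
  have k0: "\<kappa> > 0" using bz m0 C by (simp add: \<kappa>_def)
  define K where "K = Kr + Kb"
  define K' where "K' = Kq + KM"
  have K0: "K > 0" "K' > 0" using Kq KM Kr Kb by (auto simp: K_def K'_def)
  show ?thesis
  proof (rule Lim_withinI)
    fix \<epsilon> :: real assume e: "\<epsilon> > 0"
    define \<delta> where "\<delta> = min (\<kappa> / (2 * K)) (\<epsilon> * \<kappa> / (2 * K'))"
    have d0: "\<delta> > 0" using e k0 K0 by (simp add: \<delta>_def)
    have "\<forall>w \<in> nt_region (\<zeta>, lam) C. 0 < dist w (\<zeta>, lam) \<and> dist w (\<zeta>, lam) < \<delta>
            \<longrightarrow> dist (rif n p1 p2 w) x \<le> \<epsilon>"
    proof (intro ballI impI)
      fix w assume wS: "w \<in> nt_region (\<zeta>, lam) C" and wd: "0 < dist w (\<zeta>, lam) \<and> dist w (\<zeta>, lam) < \<delta>"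
      obtain z1 z2 where w: "w = (z1, z2)" by (cases w)
      have z1D: "cmod z1 < 1" and z2D: "cmod z2 < 1"
        and n1: "cmod (\<zeta> - z1) < C * (1 - cmod z1)" and n2: "cmod (lam - z2) < C * (1 - cmod z2)"
        using wS by (auto simp: nt_region_def w)
      define u where "u = cmod (z1 - \<zeta>)"
      define v where "v = cmod (z2 - lam)"
      have u0: "u > 0" using z1D z1 by (auto simp: u_def)
      have v0: "v \<ge> 0" by (simp add: v_def)
      have ud: "u < \<delta>"
      proof -
        have "u = dist (fst w) (fst (\<zeta>, lam))" by (simp add: u_def w dist_norm)
        also have "\<dots> \<le> dist w (\<zeta>, lam)" by (rule dist_fst_le)
        finally show ?thesis using wd by simp
      qed
      have uk: "K * u \<le> \<kappa> / 2"
      proof -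
        have "u \<le> \<kappa> / (2 * K)" using ud by (simp add: \<delta>_def)
        then show ?thesis using K0 by (simp add: field_simps)
      qed
      have ue: "2 * K' * u \<le> \<epsilon> * \<kappa>"
      proof -
        have "u \<le> \<epsilon> * \<kappa> / (2 * K')" using ud by (simp add: \<delta>_def)
        then show ?thesis using K0 by (simp add: field_simps)
      qed
      define \<sigma> where "\<sigma> = 1 - cnj \<zeta> * z1"
      define \<tau> where "\<tau> = 1 - cnj lam * z2"
      have s1: "u < C * Re \<sigma>" unfolding u_def \<sigma>_def by (rule nt_re[OF z1 _ n1]) (use C in simp)
      have t1: "v < C * Re \<tau>" unfolding v_def \<tau>_def by (rule nt_re[OF lam1 _ n2]) (use C in simp)
      have s2: "u / C \<le> Re \<sigma>" using s1 C by (simp add: divide_le_eq mult.commute)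
      have t2: "v / C \<le> Re \<tau>" using t1 C by (simp add: divide_le_eq mult.commute)
      have "m * (u / C) \<le> \<rho> * Re \<sigma>" by (rule mult_mono) (use m0 s2 u0 C rho in auto)
      moreover have "m * (v / C) \<le> 1 * Re \<tau>" by (rule mult_mono) (use m0 t2 v0 C in auto)
      moreover have "m * (u + v) / C = m * (u / C) + m * (v / C)" by (simp add: add_divide_distrib distrib_left)
      ultimately have "m * (u + v) / C \<le> \<rho> * Re \<sigma> + Re \<tau>" by linarith
      also have "\<rho> * Re \<sigma> + Re \<tau> = Re (of_real \<rho> * \<sigma> + \<tau>)" by simp
      also have "\<dots> \<le> cmod (of_real \<rho> * \<sigma> + \<tau>)" by (rule complex_Re_le_cmod)
      finally have lin: "m * (u + v) / C \<le> cmod (of_real \<rho> * \<sigma> + \<tau>)" .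
      define L where "L = - poly p2 \<zeta> * lam * (of_real \<rho> * \<sigma> + \<tau>)"
      define R where "R = (z1 - \<zeta>) * ((z1 - \<zeta>) * poly r2 z1 + (z2 - lam) * poly b2 z1)"
      have Dz: "pev p1 p2 z1 z2 = L + R" using den[of z1 z2] by (simp add: L_def R_def \<sigma>_def \<tau>_def)
      have Lb: "\<kappa> * (u + v) \<le> cmod L"
      proof -
        have "cmod L = cmod (poly p2 \<zeta>) * cmod (of_real \<rho> * \<sigma> + \<tau>)"
          using lam1 by (simp add: L_def norm_mult)
        moreover have "cmod (poly p2 \<zeta>) * (m * (u + v) / C) \<le> cmod (poly p2 \<zeta>) * cmod (of_real \<rho> * \<sigma> + \<tau>)"
          using lin by (rule mult_left_mono) simp
        ultimately show ?thesis by (simp add: \<kappa>_def)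
      qed
      have Rb: "cmod R \<le> K * u * (u + v)"
      proof -
        have "cmod ((z1 - \<zeta>) * poly r2 z1 + (z2 - lam) * poly b2 z1) \<le> u * Kr + v * Kb"
        proof -
          have "cmod ((z1 - \<zeta>) * poly r2 z1) \<le> u * Kr"
            using Kr(2)[of z1] z1D by (simp add: norm_mult u_def mult_left_mono)
          moreover have "cmod ((z2 - lam) * poly b2 z1) \<le> v * Kb"
            using Kb(2)[of z1] z1D by (simp add: norm_mult v_def mult_left_mono)
          ultimately show ?thesis by (meson add_mono norm_triangle_le)
        qed
        also have "\<dots> \<le> K * (u + v)" using Kr Kb u0 v0
          by (simp add: K_def algebra_simps add_mono mult_left_mono)
        finally have "cmod ((z1 - \<zeta>) * poly r2 z1 + (z2 - lam) * poly b2 z1) \<le> K * (u + v)" .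
        then have "u * cmod ((z1 - \<zeta>) * poly r2 z1 + (z2 - lam) * poly b2 z1) \<le> u * (K * (u + v))"
          using u0 by (simp add: mult_left_mono)
        then show ?thesis by (simp add: R_def norm_mult u_def mult_ac)
      qed
      have Db: "\<kappa> / 2 * (u + v) \<le> cmod (pev p1 p2 z1 z2)"
      proof -
        have "cmod L - cmod R \<le> cmod (L + R)" by (metis norm_diff_ineq norm_minus_cancel diff_minus_eq_add)
        moreover have "\<kappa> / 2 * (u + v) \<le> \<kappa> * (u + v) - K * u * (u + v)"
        proof -
          have "K * u * (u + v) \<le> \<kappa> / 2 * (u + v)" using uk u0 v0 by (simp add: mult_right_mono)
          then show ?thesis by simp
        qed
        ultimately show ?thesis using Lb Rb Dz by simp
      qed
      have uv: "u + v > 0" using u0 v0 by simp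
      have Dn: "pev p1 p2 z1 z2 \<noteq> 0" using Db k0 uv
        by (metis half_gt_zero mult_pos_pos norm_zero not_less)
      have Nb: "cmod (ptev n p1 p2 z1 z2 - x * pev p1 p2 z1 z2) \<le> K' * u * (u + v)"
      proof -
        have "cmod ((z2 - lam) * (- cnj \<zeta>) * poly qt z1 + (z1 - \<zeta>) * poly M2 z1) \<le> v * Kq + u * KM"
        proof -
          have "cmod ((z2 - lam) * (- cnj \<zeta>) * poly qt z1) \<le> v * Kq"
            using Kq(2)[of z1] z1D z1 by (simp add: norm_mult v_def mult_left_mono)
          moreover have "cmod ((z1 - \<zeta>) * poly M2 z1) \<le> u * KM"
            using KM(2)[of z1] z1D by (simp add: norm_mult u_def mult_left_mono)
          ultimately show ?thesis by (meson add_mono norm_triangle_le)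
        qed
        also have "\<dots> \<le> K' * (u + v)" using Kq KM u0 v0
          by (simp add: K'_def algebra_simps add_mono mult_left_mono)
        finally have "cmod ((z2 - lam) * (- cnj \<zeta>) * poly qt z1 + (z1 - \<zeta>) * poly M2 z1) \<le> K' * (u + v)" .
        then have "u * cmod ((z2 - lam) * (- cnj \<zeta>) * poly qt z1 + (z1 - \<zeta>) * poly M2 z1) \<le> u * (K' * (u + v))"
          using u0 by (simp add: mult_left_mono)
        then show ?thesis by (simp add: num norm_mult u_def mult_ac)
      qed
      have "dist (rif n p1 p2 w) x = cmod (ptev n p1 p2 z1 z2 - x * pev p1 p2 z1 z2) / cmod (pev p1 p2 z1 z2)"
      proof -
        have "rif n p1 p2 w - x = (ptev n p1 p2 z1 z2 - x * pev p1 p2 z1 z2) / pev p1 p2 z1 z2"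
          using Dn by (simp add: rif_def w field_simps)
        then show ?thesis by (simp add: dist_norm norm_divide)
      qed
      also have "\<dots> \<le> (K' * u * (u + v)) / (\<kappa> / 2 * (u + v))"
        by (rule frac_le) (use Nb Db k0 uv K0 u0 in auto)
      also have "\<dots> = (K' * u) / (\<kappa> / 2)"
        using uv by (intro nonzero_mult_divide_mult_cancel_right) simp
      also have "\<dots> = 2 * K' * u / \<kappa>" using k0 by (simp add: field_simps)
      also have "\<dots> \<le> \<epsilon>" using ue k0 by (simp add: divide_le_eq)
      finally show "dist (rif n p1 p2 w) x \<le> \<epsilon>" .
    qed
    then show "\<exists>\<delta>>0. \<forall>w \<in> nt_region (\<zeta>, lam) C. 0 < dist w (\<zeta>, lam) \<and> dist w (\<zeta>, lam) < \<delta>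
            \<longrightarrow> dist (rif n p1 p2 w) x \<le> \<epsilon>" using d0 by blast
  qed
qed

end


context rs begin

lemma d_eq_T:
  assumes x1: "cmod x = 1" and z1: "cmod \<zeta> = 1"
    and E0: "poly (refl n p1) \<zeta> = x * poly p2 \<zeta>"
  shows "poly (refl n p2) \<zeta> = x * poly p1 \<zeta>"
proof -
  have xx: "x * cnj x = 1" using x1 complex_norm_square[of x] by simp
  have zz: "\<zeta> * cnj \<zeta> = 1" using z1 complex_norm_square[of \<zeta>] by simp
  have c_eq: "poly (refl n p1) \<zeta> = \<zeta>^n * cnj (poly p1 \<zeta>)" by (rule poly_refl_T[OF deg1 z1])
  have d_eq0: "poly (refl n p2) \<zeta> = \<zeta>^n * cnj (poly p2 \<zeta>)" by (rule poly_refl_T[OF deg2 z1])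
  have "cnj \<zeta> ^ n * poly p1 \<zeta> = cnj x * cnj (poly p2 \<zeta>)"
    using arg_cong[OF E0, of cnj] c_eq by simp
  then have "x * \<zeta>^n * (cnj \<zeta> ^ n * poly p1 \<zeta>) = x * \<zeta>^n * (cnj x * cnj (poly p2 \<zeta>))" by simp
  moreover have "x * \<zeta>^n * (cnj \<zeta> ^ n * poly p1 \<zeta>) = x * poly p1 \<zeta> * (\<zeta> * cnj \<zeta>)^n"
    by (simp add: power_mult_distrib mult_ac)
  moreover have "x * \<zeta>^n * (cnj x * cnj (poly p2 \<zeta>)) = (x * cnj x) * (\<zeta>^n * cnj (poly p2 \<zeta>))"
    by (simp add: mult_ac)
  ultimately show ?thesis using zz xx d_eq0 by simp
qed

lemma exc_of_E:
  assumes x1: "cmod x = 1" and z1: "cmod \<zeta> = 1"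
    and E0: "poly (refl n p1) \<zeta> = x * poly p2 \<zeta>"
  shows "(x, \<zeta>) \<in> exc_pts n p1 p2"
proof -
  have az: "poly p1 \<zeta> \<noteq> 0" using p1_T[OF z1] .
  have "cmod (poly p2 \<zeta>) = cmod (poly (refl n p1) \<zeta>)" using E0 x1 by (simp add: norm_mult)
  also have "\<dots> = cmod (poly p1 \<zeta>)" by (rule cmod_refl1[OF z1])
  finally have ab: "cmod (poly p2 \<zeta>) = cmod (poly p1 \<zeta>)" .
  have bz: "poly p2 \<zeta> \<noteq> 0" using az ab by auto
  define lam where "lam = - poly p1 \<zeta> / poly p2 \<zeta>"
  have lam1: "cmod lam = 1" using ab bz az by (simp add: lam_def norm_divide)
  have lamE: "poly p1 \<zeta> + lam * poly p2 \<zeta> = 0" using bz by (simp add: lam_def)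
  have deq: "poly (refl n p2) \<zeta> = x * poly p1 \<zeta>" by (rule d_eq_T[OF x1 z1 E0])
  have pev0: "pev p1 p2 \<zeta> lam = 0" using lamE by (simp add: pev_def mult.commute)
  have ntl: "nt_limit (rif n p1 p2) (\<zeta>, lam) x"
    unfolding nt_limit_def using nt_tendsto[OF x1 z1 lam1 lamE E0] by blast
  have line: "\<forall>\<mu>\<in>sphere 0 1. ptev n p1 p2 \<zeta> \<mu> = x * pev p1 p2 \<zeta> \<mu>"
    by (simp add: ptev_def pev_def E0 deq algebra_simps)
  show ?thesis unfolding exc_pts_def using z1 lam1 pev0 ntl line by auto
qed

lemma P_nonzero: "p1 * refl n p1 - p2 * refl n p2 \<noteq> 0"
proof
  assume "p1 * refl n p1 - p2 * refl n p2 = 0"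
  then have eq: "p1 * refl n p1 = p2 * refl n p2" by simp
  define g where "g = gcd p1 p2"
  have gn: "g \<noteq> 0" using p1_nonzero by (simp add: g_def)
  obtain a' b' where ab0: "p1 = a' * gcd p1 p2" "p2 = b' * gcd p1 p2" "coprime a' b'"
    using gcd_coprime_exists[of p1 p2] gn by (auto simp: g_def)
  have ab: "p1 = a' * g" "p2 = b' * g" "coprime a' b'" using ab0 by (simp_all add: g_def)
  have a'0: "a' \<noteq> 0" using ab(1) p1_nonzero by auto
  have "(a' * refl n p1) * g = (a' * g) * refl n p1" by (simp add: mult_ac)
  also have "\<dots> = p1 * refl n p1" by (simp only: ab(1)[symmetric])
  also have "\<dots> = p2 * refl n p2" by (rule eq)
  also have "\<dots> = (b' * g) * refl n p2" by (simp only: ab(2)[symmetric])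
  also have "\<dots> = (b' * refl n p2) * g" by (simp add: mult_ac)
  finally have e2: "a' * refl n p1 = b' * refl n p2" using gn by simp
  then have "a' dvd b' * refl n p2" by (metis dvd_triv_left)
  then have "a' dvd refl n p2" using ab(3) coprime_dvd_mult_right_iff by blast
  then obtain h where h: "refl n p2 = a' * h" by (auto elim!: dvdE)
  have "a' * refl n p1 = a' * (b' * h)" using e2 h by (simp add: mult_ac)
  then have ch: "refl n p1 = b' * h" using a'0 by simp
  define A where "A = [:a', b':]"
  have "[:g:] * A = [:g * a', g * b':]" by (simp add: A_def)
  also have "\<dots> = [:p1, p2:]" by (simp only: ab(1,2) mult.commute[of g])
  finally have d1: "A dvd [:p1, p2:]" by (metis dvd_triv_right)
  have "[:h:] * A = [:h * a', h * b':]" by (simp add: A_def)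
  also have "\<dots> = [:refl n p2, refl n p1:]" by (simp only: h ch mult.commute[of h])
  finally have d2: "A dvd [:refl n p2, refl n p1:]" by (metis dvd_triv_right)
  have "is_unit A" using coprime_common_divisor[OF no_common d1 d2] .
  then obtain k where "A = [:k:]" using is_unit_poly_iff by blast
  then have b'0: "b' = 0" by (simp add: A_def)
  then have "p2 = 0" using ab(2) by simp
  then have "p1 * refl n p1 = 0" using eq by simp
  then have "refl n p1 = 0" using p1_nonzero by simp
  then have "p1 = 0" using refl_zero_iff[OF deg1] by simp
  then show False using p1_nonzero by simp
qed

lemma finite_exc: "finite (exc_pts n p1 p2)"
proof -
  define P where "P = p1 * refl n p1 - p2 * refl n p2"
  define Z where "Z = {\<tau>. poly P \<tau> = 0}"
  have fZ: "finite Z" unfolding Z_def P_def by (rule poly_roots_finite[OF P_nonzero])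
  define f where "f = (\<lambda>\<tau> \<mu>. ptev n p1 p2 \<tau> \<mu> / pev p1 p2 \<tau> \<mu>)"
  have sub: "exc_pts n p1 p2 \<subseteq> (\<Union>\<tau>\<in>Z. {f \<tau> 1, f \<tau> (-1)} \<times> {\<tau>})"
  proof
    fix z assume "z \<in> exc_pts n p1 p2"
    then obtain \<alpha> \<tau> lam where z: "z = (\<alpha>, \<tau>)" and t1: "cmod \<tau> = 1" and l1: "cmod lam = 1"
      and pz: "pev p1 p2 \<tau> lam = 0" and line: "\<forall>\<mu>\<in>sphere 0 1. ptev n p1 p2 \<tau> \<mu> = \<alpha> * pev p1 p2 \<tau> \<mu>"
      unfolding exc_pts_def by auto
    have ae: "poly p1 \<tau> = - lam * poly p2 \<tau>" using pz by (simp add: pev_def eq_neg_iff_add_eq_0 mult.commute)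
    have ab: "cmod (poly p1 \<tau>) = cmod (poly p2 \<tau>)" using ae l1 by (simp add: norm_mult)
    have aa: "poly p1 \<tau> * cnj (poly p1 \<tau>) = poly p2 \<tau> * cnj (poly p2 \<tau>)"
      using ab by (metis complex_norm_square)
    have "poly P \<tau> = \<tau>^n * (poly p1 \<tau> * cnj (poly p1 \<tau>)) - \<tau>^n * (poly p2 \<tau> * cnj (poly p2 \<tau>))"
      by (simp add: P_def poly_refl_T[OF deg1 t1] poly_refl_T[OF deg2 t1] mult_ac)
    then have "\<tau> \<in> Z" using aa by (simp add: Z_def)
    moreover have "\<alpha> \<in> {f \<tau> 1, f \<tau> (-1)}"
    proof (cases "pev p1 p2 \<tau> 1 = 0")
      case False
      have "ptev n p1 p2 \<tau> 1 = \<alpha> * pev p1 p2 \<tau> 1" using line by simp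
      then show ?thesis using False by (simp add: f_def)
    next
      case True
      have "pev p1 p2 \<tau> (-1) \<noteq> 0"
      proof
        assume "pev p1 p2 \<tau> (-1) = 0"
        then have "poly p1 \<tau> = 0" using True by (simp add: pev_def)
        then show False using p1_T[OF t1] by simp
      qed
      moreover have "ptev n p1 p2 \<tau> (-1) = \<alpha> * pev p1 p2 \<tau> (-1)" using line by simp
      ultimately show ?thesis by (simp add: f_def)
    qed
    ultimately show "z \<in> (\<Union>\<tau>\<in>Z. {f \<tau> 1, f \<tau> (-1)} \<times> {\<tau>})" using z by blast
  qed
  show ?thesis by (rule finite_subset[OF sub]) (use fZ in auto)
qed

lemma part1:
  assumes z: "z \<in> sphere 0 1 \<times> sphere 0 1 - exc_pts n p1 p2"
  shows "poly (refl n p1) (snd z) - fst z * poly p2 (snd z) \<noteq> 0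
     \<and> continuous (at z within sphere 0 1 \<times> sphere 0 1) (\<lambda>(x, \<zeta>). Wfun n p1 p2 x \<zeta>)"
proof -
  obtain x \<zeta> where zx: "z = (x, \<zeta>)" by (cases z)
  have x1: "cmod x = 1" and z1: "cmod \<zeta> = 1" and ne: "(x, \<zeta>) \<notin> exc_pts n p1 p2"
    using z by (auto simp: zx)
  have E: "poly (refl n p1) \<zeta> - x * poly p2 \<zeta> \<noteq> 0"
    using exc_of_E[OF x1 z1] ne by auto
  have eqf: "(\<lambda>(x, \<zeta>). Wfun n p1 p2 x \<zeta>) = (\<lambda>w. Wfun n p1 p2 (fst w) (snd w))"
    by (simp add: case_prod_beta')
  have "isCont (\<lambda>w. Wfun n p1 p2 (fst w) (snd w)) (x, \<zeta>)"
    unfolding Wfun_def using E by (intro continuous_intros) auto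
  then have "continuous (at z within sphere 0 1 \<times> sphere 0 1) (\<lambda>(x, \<zeta>). Wfun n p1 p2 x \<zeta>)"
    unfolding eqf zx by (rule continuous_at_imp_continuous_within)
  then show ?thesis using E by (simp add: zx)
qed

end


lemma fix_disc:
  fixes f L :: "complex \<Rightarrow> real"
  assumes fin: "finite D"
    and cont: "\<And>\<zeta>. \<zeta> \<in> S \<Longrightarrow> \<zeta> \<notin> D \<Longrightarrow> continuous (at \<zeta> within S) f"
    and lim: "\<And>\<zeta>. \<zeta> \<in> D \<Longrightarrow> (f \<longlongrightarrow> L \<zeta>) (at \<zeta> within S)"
  shows "continuous_on S (\<lambda>z. if z \<in> D then L z else f z)"
  unfolding continuous_on_eq_continuous_within
proof
  fix x assume xS: "x \<in> S"
  define g where "g = (\<lambda>z. if z \<in> D then L z else f z)"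
  have op: "open (- (D - {x}))" using fin by (intro open_Compl finite_imp_closed) auto
  have "\<forall>\<^sub>F z in nhds x. z \<in> - (D - {x})" by (rule eventually_nhds_in_open[OF op]) simp
  then have ev: "\<forall>\<^sub>F z in at x within S. f z = g z"
    unfolding eventually_at_filter by eventually_elim (auto simp: g_def)
  show "continuous (at x within S) g"
    unfolding continuous_within
  proof (cases "x \<in> D")
    case True
    then show "(g \<longlongrightarrow> g x) (at x within S)"
      using Lim_transform_eventually[OF lim[OF True] ev] by (simp add: g_def)
  next
    case False
    then have "(f \<longlongrightarrow> f x) (at x within S)" using cont[OF xS False] by (simp add: continuous_within)
    then show "(g \<longlongrightarrow> g x) (at x within S)"
      using Lim_transform_eventually[OF _ ev] False by (simp add: g_def)
  qed
qed

lemma cis_fiber: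
  assumes "cis (2 * pi * t) = cis (2 * pi * t0)"
  shows "t \<in> range (\<lambda>k::int. t0 + of_int k)"
proof -
  have "exp (\<i> * complex_of_real (2 * pi * t)) = exp (\<i> * complex_of_real (2 * pi * t0))"
    using assms by (simp add: cis_conv_exp)
  then obtain k :: int where k: "\<i> * complex_of_real (2 * pi * t) = \<i> * complex_of_real (2 * pi * t0) + complex_of_real (real_of_int (2 * k) * pi) * \<i>"
    unfolding exp_eq by blast
  then have "Im (\<i> * complex_of_real (2 * pi * t)) = Im (\<i> * complex_of_real (2 * pi * t0) + complex_of_real (real_of_int (2 * k) * pi) * \<i>)"
    by simp
  then have "2 * pi * t = 2 * pi * t0 + 2 * k * pi" by simp
  then have "(2 * pi) * t = (2 * pi) * (t0 + k)" by (simp add: algebra_simps)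
  then have "t = t0 + k" using pi_gt_zero by (simp only: mult_cancel_left) simp
  then show ?thesis by blast
qed

lemma ae_cis:
  assumes fin: "finite D"
  shows "AE t in lebesgue_on {0..1}. cis (2 * pi * t) \<notin> D"
proof -
  define N where "N = {t. cis (2 * pi * t) \<in> D} \<inter> {0..1::real}"
  have "{t. cis (2 * pi * t) \<in> D} = (\<Union>e\<in>D. {t. cis (2 * pi * t) = e})" by auto
  moreover have "countable {t. cis (2 * pi * t) = e}" for e
  proof (cases "\<exists>t0. cis (2 * pi * t0) = e")
    case True
    then obtain t0 where t0: "cis (2 * pi * t0) = e" by blast
    have "{t. cis (2 * pi * t) = e} \<subseteq> range (\<lambda>k::int. t0 + of_int k)"
      using cis_fiber t0 by auto
    then show ?thesis by (rule countable_subset) simp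
  next
    case False
    then show ?thesis by simp
  qed
  ultimately have "countable {t. cis (2 * pi * t) \<in> D}" using fin by (simp add: countable_finite)
  then have cN: "countable N" unfolding N_def by (rule countable_subset[rotated]) auto
  have Iset: "{0..1::real} \<in> sets lebesgue"
    by (rule sets_completionI_sets) (simp add: sets_lborel)
  have "N \<in> null_sets lebesgue"
    by (rule null_sets_completionI[OF countable_imp_null_set_lborel[OF cN]])
  then have Nn: "N \<in> null_sets (lebesgue_on {0..1})"
    using null_sets_restrict_space[OF Iset] by (auto simp: N_def)
  show ?thesis
    by (rule AE_I'[OF Nn]) (auto simp: N_def space_restrict_space)
qed

context rs begin

lemma W_zero_T:
  assumes "Qa \<alpha> = 0" "cmod z = 1"
  shows "Wfun n p1 p2 \<alpha> z = 0"
proof -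
  have "cmod (poly (refl n p1) z - \<alpha> * poly p2 z) = 0" using cmod_E[OF assms(2)] assms(1) by simp
  then show ?thesis by (simp add: Wfun_def)
qed

lemma W_cont_T:
  assumes "poly (refl n p1) \<zeta> - \<alpha> * poly p2 \<zeta> \<noteq> 0"
  shows "continuous (at \<zeta> within S) (Wfun n p1 p2 \<alpha>)"
proof -
  have "isCont (Wfun n p1 p2 \<alpha>) \<zeta>"
    unfolding Wfun_def using assms by (intro continuous_intros) auto
  then show ?thesis by (rule continuous_at_imp_continuous_within)
qed

lemma part2:
  assumes a1: "cmod \<alpha> = 1"
  shows "finite {\<zeta> \<in> sphere 0 1. \<not> continuous (at \<zeta> within sphere 0 1) (Wfun n p1 p2 \<alpha>)}
          \<and> (\<forall>\<zeta> \<in> {\<zeta> \<in> sphere 0 1. \<not> continuous (at \<zeta> within sphere 0 1) (Wfun n p1 p2 \<alpha>)}.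
               \<exists>L. (Wfun n p1 p2 \<alpha> \<longlongrightarrow> L) (at \<zeta> within sphere 0 1))
          \<and> (\<exists>g. continuous_on (sphere 0 1) g \<and> bounded (g ` sphere 0 1)
               \<and> (AE t in lebesgue_on {0..1}. Wfun n p1 p2 \<alpha> (cis (2 * pi * t)) = g (cis (2 * pi * t))))"
proof -
  define S :: "complex set" where "S = sphere 0 1"
  define W where "W = Wfun n p1 p2 \<alpha>"
  define Dd where "Dd = {\<zeta> \<in> S. \<not> continuous (at \<zeta> within S) W}"
  have A: "finite Dd \<and> (\<forall>\<zeta>\<in>Dd. \<exists>L. (W \<longlongrightarrow> L) (at \<zeta> within S))"
  proof (cases "Qa \<alpha> = 0")
    case True
    have "Dd = {}"
    proof -
      have "continuous (at \<zeta> within S) W" if "\<zeta> \<in> S" for \<zeta>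
      proof -
        have ev: "\<forall>\<^sub>F z in at \<zeta> within S. 0 = W z"
          by (auto simp: eventually_at_filter W_def S_def W_zero_T[OF True])
        have "(W \<longlongrightarrow> 0) (at \<zeta> within S)" by (rule Lim_transform_eventually[OF tendsto_const ev])
        moreover have "W \<zeta> = 0" using that by (simp add: W_def S_def W_zero_T[OF True])
        ultimately show ?thesis by (simp add: continuous_within)
      qed
      then show ?thesis by (auto simp: Dd_def)
    qed
    then show ?thesis by simp
  next
    case False
    have sub: "Dd \<subseteq> {z. poly (Qa \<alpha>) z = 0}"
    proof
      fix \<zeta> assume z: "\<zeta> \<in> Dd"
      then have z1: "cmod \<zeta> = 1" by (simp add: Dd_def S_def)
      show "\<zeta> \<in> {z. poly (Qa \<alpha>) z = 0}"
      proof (rule ccontr)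
        assume "\<zeta> \<notin> {z. poly (Qa \<alpha>) z = 0}"
        then have "poly (refl n p1) \<zeta> - \<alpha> * poly p2 \<zeta> \<noteq> 0" using cmod_E[OF z1, of \<alpha>] by auto
        then have "continuous (at \<zeta> within S) W" unfolding W_def by (rule W_cont_T)
        then show False using z by (simp add: Dd_def)
      qed
    qed
    have "finite Dd" by (rule finite_subset[OF sub poly_roots_finite[OF False]])
    moreover have "\<exists>L. (W \<longlongrightarrow> L) (at \<zeta> within S)" if "\<zeta> \<in> Dd" for \<zeta>
    proof -
      have z1: "cmod \<zeta> = 1" using that by (simp add: Dd_def S_def)
      have "poly (Qa \<alpha>) \<zeta> = 0" using sub that by auto
      then show ?thesis using W_limit[OF a1 z1 _ False] by (simp add: W_def S_def)
    qed
    ultimately show ?thesis by blast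
  qed
  define L where "L = (\<lambda>\<zeta>. SOME l. (W \<longlongrightarrow> l) (at \<zeta> within S))"
  define g where "g = (\<lambda>z. if z \<in> Dd then L z else W z)"
  have gc: "continuous_on S g"
    unfolding g_def
  proof (rule fix_disc)
    show "finite Dd" using A by blast
    show "continuous (at \<zeta> within S) W" if "\<zeta> \<in> S" "\<zeta> \<notin> Dd" for \<zeta> using that by (simp add: Dd_def)
    show "(W \<longlongrightarrow> L \<zeta>) (at \<zeta> within S)" if "\<zeta> \<in> Dd" for \<zeta>
      using A that unfolding L_def by (metis someI_ex)
  qed
  have gb: "bounded (g ` S)"
    by (rule compact_imp_bounded[OF compact_continuous_image[OF gc]]) (simp add: S_def)
  have ae: "AE t in lebesgue_on {0..1}. W (cis (2 * pi * t)) = g (cis (2 * pi * t))"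
  proof -
    have "AE t in lebesgue_on {0..1}. cis (2 * pi * t) \<notin> Dd" using ae_cis A by blast
    then show ?thesis by (rule eventually_mono) (simp add: g_def)
  qed
  show ?thesis using A gc gb ae unfolding Dd_def S_def W_def by blast
qed

end


theorem lemma3p7:
  fixes n :: nat and p1 p2 :: "complex poly"
  assumes n_pos: "n \<ge> 1"
    and deg: "degree p1 \<le> n" "degree p2 \<le> n"
    and no_zeros: "\<And>z1 z2. norm z1 < 1 \<Longrightarrow> norm z2 < 1 \<Longrightarrow> pev p1 p2 z1 z2 \<noteq> 0"
    and deg_tilde: "refl n p1 \<noteq> 0" "max (degree (refl n p1)) (degree (refl n p2)) = n"
    and no_common: "coprime [:p1, p2:] [:refl n p2, refl n p1:]"
  shows "finite (exc_pts n p1 p2)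
     \<and> (\<forall>z \<in> sphere 0 1 \<times> sphere 0 1 - exc_pts n p1 p2.
          poly (refl n p1) (snd z) - fst z * poly p2 (snd z) \<noteq> 0
          \<and> continuous (at z within sphere 0 1 \<times> sphere 0 1) (\<lambda>(x, \<zeta>). Wfun n p1 p2 x \<zeta>))
     \<and> (\<forall>\<alpha> \<in> sphere 0 1.
          finite {\<zeta> \<in> sphere 0 1. \<not> continuous (at \<zeta> within sphere 0 1) (Wfun n p1 p2 \<alpha>)}
          \<and> (\<forall>\<zeta> \<in> {\<zeta> \<in> sphere 0 1. \<not> continuous (at \<zeta> within sphere 0 1) (Wfun n p1 p2 \<alpha>)}.
               \<exists>L. (Wfun n p1 p2 \<alpha> \<longlongrightarrow> L) (at \<zeta> within sphere 0 1))
          \<and> (\<exists>g. continuous_on (sphere 0 1) g \<and> bounded (g ` sphere 0 1)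
               \<and> (AE t in lebesgue_on {0..1}. Wfun n p1 p2 \<alpha> (cis (2 * pi * t)) = g (cis (2 * pi * t)))))"
  proof -
  interpret rs n p1 p2
    by (rule rs.intro) (use n_pos deg no_zeros no_common in auto)
  have c1: "finite (exc_pts n p1 p2)" by (rule finite_exc)
  have c2: "\<forall>z \<in> sphere 0 1 \<times> sphere 0 1 - exc_pts n p1 p2.
          poly (refl n p1) (snd z) - fst z * poly p2 (snd z) \<noteq> 0
          \<and> continuous (at z within sphere 0 1 \<times> sphere 0 1) (\<lambda>(x, \<zeta>). Wfun n p1 p2 x \<zeta>)"
    using part1 by blast
  have c3: "\<forall>\<alpha> \<in> sphere 0 1.
          finite {\<zeta> \<in> sphere 0 1. \<not> continuous (at \<zeta> within sphere 0 1) (Wfun n p1 p2 \<alpha>)}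
          \<and> (\<forall>\<zeta> \<in> {\<zeta> \<in> sphere 0 1. \<not> continuous (at \<zeta> within sphere 0 1) (Wfun n p1 p2 \<alpha>)}.
               \<exists>L. (Wfun n p1 p2 \<alpha> \<longlongrightarrow> L) (at \<zeta> within sphere 0 1))
          \<and> (\<exists>g. continuous_on (sphere 0 1) g \<and> bounded (g ` sphere 0 1)
               \<and> (AE t in lebesgue_on {0..1}. Wfun n p1 p2 \<alpha> (cis (2 * pi * t)) = g (cis (2 * pi * t))))"
    using part2 by simp
  show ?thesis using c1 c2 c3 by blast
qed

end
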